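(* Let $x=(x_1,\dots,x_n)$ be variables, $f=(f_1,\dots,f_n)$ differential-free terms such that the ODE $x'=f(x)$ locally evolves $x$ (in every state the value of $f$ is not the zero vector), $P$ a semianalytic formula, and $y=(y_1,\dots,y_n)$ variables fresh in $[x'=f(x)]P$. Then the formula $$[x'=f(x)]P\;\leftrightarrow\;\forall y\,[x'=f(x)\,\&\,P\vee x=y]\Big(x=y\rightarrow P\wedge\langle x'=f(x)\,\&\,P\vee x=y\rangle\, x\neq y\Big)$$ is valid.
   Context: Variables are real-valued; each variable $x$ has a differential variable $x'$. A state is a map from variables to $\mathbb{R}$. Terms are built from variables, rational constants, $+$, $\cdot$ and finitely many fixed function symbols interpreted as $C^\infty$ functions $\mathbb{R}^k\to\mathbb{R}$, evaluated as usual; differential-free terms contain no differential variables. Semianalytic formulas are built from comparisons $e\sim\tilde e$ ($\sim\in\{=,\ge,>\}$) of differential-free terms by $\wedge,\vee,\neg$. For vectors, $x=y$ abbreviates $\bigwedge_i x_i=y_i$, $x\neq y$ its negation, and $\forall y$ quantifies all $y_i$. Semantics of ODEs: $(\omega,\nu)\in[\![x'=f(x)\&Q]\!]$ iff there are $T\ge0$ and $\varphi:[0,T]\to$ states with $\varphi(0)=\omega$ on all variables except $x'$, $\varphi(T)=\nu$, and for all $\zeta\in[0,T]$: $\varphi(\zeta)$ satisfies $x'=f(x)\wedge Q$, $\varphi(\zeta)$ agrees with $\varphi(0)$ on variables other than $x,x'$, and, if $T>0$, $t\mapsto\varphi(t)(x)$ is differentiable at $\zeta$ with derivative $\varphi(\zeta)(x')$.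 $x'=f(x)$ without domain means $Q$ is true. $\omega\models[\alpha]\phi$ iff $\nu\models\phi$ for all $\nu$ with $(\omega,\nu)\in[\![\alpha]\!]$; $\omega\models\langle\alpha\rangle\phi$ iff $\nu\models\phi$ for some such $\nu$. A formula is valid if true in all states. *)

theory Defs
  imports "HOL-Analysis.Analysis"
begin

type_synonym ident = nat

text \<open>Each variable x has a differential variable x'. V x is x, D x is x'.\<close>
datatype var = V ident | D ident

type_synonym state = "var \<Rightarrow> real"

datatype trm = Var var | Const rat | Plus trm trm | Times trm trm | Fn nat "trm list"

datatype cmp = Eq | Geq | Gt

datatype fml = Cmp cmp trm trm | And fml fml | Or fml fml | Not fml

fun tsem :: "(nat \<Rightarrow> real list \<Rightarrow> real) \<Rightarrow> trm \<Rightarrow> state \<Rightarrow> real" where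
  "tsem I (Var v) s = s v"
| "tsem I (Const r) s = of_rat r"
| "tsem I (Plus a b) s = tsem I a s + tsem I b s"
| "tsem I (Times a b) s = tsem I a s * tsem I b s"
| "tsem I (Fn g ts) s = I g (map (\<lambda>t. tsem I t s) ts)"

fun csem :: "cmp \<Rightarrow> real \<Rightarrow> real \<Rightarrow> bool" where
  "csem Eq a b = (a = b)"
| "csem Geq a b = (a \<ge> b)"
| "csem Gt a b = (a > b)"

fun fsem :: "(nat \<Rightarrow> real list \<Rightarrow> real) \<Rightarrow> fml \<Rightarrow> state \<Rightarrow> bool" where
  "fsem I (Cmp c a b) s = csem c (tsem I a s) (tsem I b s)"
| "fsem I (And p q) s = (fsem I p s \<and> fsem I q s)"
| "fsem I (Or p q) s = (fsem I p s \<or> fsem I q s)"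
| "fsem I (Not p) s = (\<not> fsem I p s)"

fun wf_trm :: "(nat \<Rightarrow> nat) \<Rightarrow> trm \<Rightarrow> bool" where
  "wf_trm ar (Var v) = True"
| "wf_trm ar (Const r) = True"
| "wf_trm ar (Plus a b) = (wf_trm ar a \<and> wf_trm ar b)"
| "wf_trm ar (Times a b) = (wf_trm ar a \<and> wf_trm ar b)"
| "wf_trm ar (Fn g ts) = (length ts = ar g \<and> (\<forall>t\<in>set ts. wf_trm ar t))"

fun tvars :: "trm \<Rightarrow> var set" where
  "tvars (Var v) = {v}"
| "tvars (Const r) = {}"
| "tvars (Plus a b) = tvars a \<union> tvars b"
| "tvars (Times a b) = tvars a \<union> tvars b"
| "tvars (Fn g ts) = (\<Union>t\<in>set ts. tvars t)"

definition dfree :: "trm \<Rightarrow> bool" where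
  "dfree t \<longleftrightarrow> (\<forall>x. D x \<notin> tvars t)"

fun fterms :: "fml \<Rightarrow> trm set" where
  "fterms (Cmp c a b) = {a, b}"
| "fterms (And p q) = fterms p \<union> fterms q"
| "fterms (Or p q) = fterms p \<union> fterms q"
| "fterms (Not p) = fterms p"

definition fvars :: "fml \<Rightarrow> var set" where
  "fvars P = (\<Union>t\<in>fterms P. tvars t)"

definition semianalytic :: "(nat \<Rightarrow> nat) \<Rightarrow> fml \<Rightarrow> bool" where
  "semianalytic ar P \<longleftrightarrow> (\<forall>t\<in>fterms P. wf_trm ar t \<and> dfree t)"

definition partial :: "nat \<Rightarrow> (real list \<Rightarrow> real) \<Rightarrow> real list \<Rightarrow> real" where
  "partial i g xs = deriv (\<lambda>t. g (xs[i := t])) (xs ! i)"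

fun iter_partial :: "nat list \<Rightarrow> (real list \<Rightarrow> real) \<Rightarrow> real list \<Rightarrow> real" where
  "iter_partial [] g = g"
| "iter_partial (i # is) g = partial i (iter_partial is g)"

definition cont_list :: "nat \<Rightarrow> (real list \<Rightarrow> real) \<Rightarrow> bool" where
  "cont_list k g \<longleftrightarrow> (\<forall>xs. length xs = k \<longrightarrow>
     (\<forall>e>0. \<exists>d>0. \<forall>ys. length ys = k \<and> (\<forall>i<k. \<bar>ys ! i - xs ! i\<bar> < d) \<longrightarrow> \<bar>g ys - g xs\<bar> < e))"

definition smooth :: "nat \<Rightarrow> (real list \<Rightarrow> real) \<Rightarrow> bool" where
  "smooth k g \<longleftrightarrow> (\<forall>is. set is \<subseteq> {..<k} \<longrightarrow>
     cont_list k (iter_partial is g) \<and>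
     (\<forall>i<k. \<forall>xs. length xs = k \<longrightarrow>
        (\<lambda>t. iter_partial is g (xs[i := t])) differentiable (at (xs ! i))))"

text \<open>Transition relation of x' = f(x) & Q, where xs lists the variables x_i and fs the terms f_i.\<close>
definition ode_rel :: "(nat \<Rightarrow> real list \<Rightarrow> real) \<Rightarrow> ident list \<Rightarrow> trm list \<Rightarrow> (state \<Rightarrow> bool)
    \<Rightarrow> state \<Rightarrow> state \<Rightarrow> bool" where
  "ode_rel I xs fs Q \<omega> \<nu> \<longleftrightarrow>
    (\<exists>T\<ge>0. \<exists>\<phi> :: real \<Rightarrow> state.
       (\<forall>v. v \<notin> D ` set xs \<longrightarrow> \<phi> 0 v = \<omega> v) \<and> \<phi> T = \<nu> \<and>
       (\<forall>\<zeta>\<in>{0..T}.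
          (\<forall>i<length xs. \<phi> \<zeta> (D (xs ! i)) = tsem I (fs ! i) (\<phi> \<zeta>)) \<and> Q (\<phi> \<zeta>) \<and>
          (\<forall>v. v \<notin> V ` set xs \<and> v \<notin> D ` set xs \<longrightarrow> \<phi> \<zeta> v = \<phi> 0 v) \<and>
          (T > 0 \<longrightarrow> (\<forall>i<length xs.
              ((\<lambda>t. \<phi> t (V (xs ! i))) has_real_derivative \<phi> \<zeta> (D (xs ! i))) (at \<zeta> within {0..T})))))"

definition box :: "(state \<Rightarrow> state \<Rightarrow> bool) \<Rightarrow> (state \<Rightarrow> bool) \<Rightarrow> state \<Rightarrow> bool" where
  "box R \<phi> \<omega> \<longleftrightarrow> (\<forall>\<nu>. R \<omega> \<nu> \<longrightarrow> \<phi> \<nu>)"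

definition dia :: "(state \<Rightarrow> state \<Rightarrow> bool) \<Rightarrow> (state \<Rightarrow> bool) \<Rightarrow> state \<Rightarrow> bool" where
  "dia R \<phi> \<omega> \<longleftrightarrow> (\<exists>\<nu>. R \<omega> \<nu> \<and> \<phi> \<nu>)"

definition veq :: "ident list \<Rightarrow> ident list \<Rightarrow> state \<Rightarrow> bool" where
  "veq xs ys s \<longleftrightarrow> (\<forall>i<length xs. s (V (xs ! i)) = s (V (ys ! i)))"

end

theory Submission
  imports Defs
begin


lemma mvt_abs:
  fixes f f' :: "real \<Rightarrow> real"
  assumes "\<And>t. min a b \<le> t \<Longrightarrow> t \<le> max a b \<Longrightarrow> (f has_real_derivative f' t) (at t) \<and> \<bar>f' t\<bar> \<le> B"
  shows "\<bar>f a - f b\<bar> \<le> B * \<bar>a - b\<bar>"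
proof (cases a b rule: linorder_cases)
  case less
  then obtain z where z: "a < z" "z < b" "f b - f a = (b - a) * f' z"
    using MVT2[of a b f f'] assms by force
  have "\<bar>f' z\<bar> \<le> B" using assms[of z] z less by auto
  then have "\<bar>f b - f a\<bar> \<le> \<bar>b - a\<bar> * B" using z by (simp add: abs_mult mult_left_mono)
  then show ?thesis by (simp add: abs_minus_commute mult.commute)
next
  case equal then show ?thesis by simp
next
  case greater
  then obtain z where z: "b < z" "z < a" "f a - f b = (a - b) * f' z"
    using MVT2[of b a f f'] assms by force
  have "\<bar>f' z\<bar> \<le> B" using assms[of z] z greater by auto
  then have "\<bar>f a - f b\<bar> \<le> \<bar>a - b\<bar> * B" using z by (simp add: abs_mult mult_left_mono)
  then show ?thesis by (simp add: mult.commute)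
qed

lemma smooth_deriv:
  assumes "smooth k g" "length q = k" "i < k"
  shows "((\<lambda>t. g (q[i:=t])) has_real_derivative partial i g (q[i:=t0])) (at t0)"
proof -
  have "(\<lambda>t. iter_partial [] g ((q[i:=t0])[i := t])) differentiable (at ((q[i:=t0]) ! i))"
    using assms unfolding smooth_def by (metis empty_set empty_subsetI length_list_update)
  then have "(\<lambda>t. g (q[i := t])) differentiable (at t0)" using assms by simp
  then show ?thesis unfolding partial_def using assms
    by (simp add: DERIV_deriv_iff_real_differentiable)
qed

lemma smooth_cont_partial:
  assumes "smooth k g" "i < k"
  shows "cont_list k (partial i g)"
  using assms unfolding smooth_def
  by (metis empty_subsetI insert_subset iter_partial.simps lessThan_iff list.set(1) list.set(2))

lemma smooth_lip:
  assumes sm: "smooth k g" and lp: "length p = k"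
  shows "\<exists>d>0. \<exists>K\<ge>0. \<forall>q r. length q = k \<longrightarrow> length r = k \<longrightarrow>
     (\<forall>i<k. \<bar>q!i - p!i\<bar> < d) \<longrightarrow> (\<forall>i<k. \<bar>r!i - p!i\<bar> < d) \<longrightarrow>
     \<bar>g q - g r\<bar> \<le> K * (\<Sum>i<k. \<bar>q!i - r!i\<bar>)"
proof -
  have "\<forall>i\<in>{..<k}. \<exists>d>0. \<forall>ys. length ys = k \<and> (\<forall>j<k. \<bar>ys ! j - p ! j\<bar> < d) \<longrightarrow>
        \<bar>partial i g ys - partial i g p\<bar> < 1"
  proof
    fix i assume "i \<in> {..<k}"
    then have "cont_list k (partial i g)" using smooth_cont_partial[OF sm] by auto
    then show "\<exists>d>0. \<forall>ys. length ys = k \<and> (\<forall>j<k. \<bar>ys ! j - p ! j\<bar> < d) \<longrightarrow>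
        \<bar>partial i g ys - partial i g p\<bar> < 1"
      unfolding cont_list_def using lp zero_less_one by blast
  qed
  then obtain dd where dd: "\<forall>i\<in>{..<k}. dd i > 0 \<and> (\<forall>ys. length ys = k \<and> (\<forall>j<k. \<bar>ys ! j - p ! j\<bar> < dd i) \<longrightarrow>
        \<bar>partial i g ys - partial i g p\<bar> < 1)"
    by (rule bchoice[THEN exE]) blast
  define d where "d = Min (insert 1 (dd ` {..<k}))"
  have d0: "d > 0" unfolding d_def using dd by (subst Min_gr_iff) auto
  have dle: "i < k \<Longrightarrow> d \<le> dd i" for i unfolding d_def by (rule Min_le) auto
  define B where "B i = \<bar>partial i g p\<bar> + 1" for i
  define K where "K = (\<Sum>i<k. B i)"
  have B0: "B i \<ge> 0" for i unfolding B_def by simp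
  have BK: "i < k \<Longrightarrow> B i \<le> K" for i unfolding K_def
    using B0 by (intro member_le_sum) auto
  have K0: "K \<ge> 0" unfolding K_def using B0 by (simp add: sum_nonneg)
  have main: "\<bar>g q - g r\<bar> \<le> K * (\<Sum>i<k. \<bar>q!i - r!i\<bar>)"
    if q: "length q = k" and r: "length r = k" and qd: "\<forall>i<k. \<bar>q!i - p!i\<bar> < d"
      and rd: "\<forall>i<k. \<bar>r!i - p!i\<bar> < d" for q r
  proof -
    define w where "w j = map (\<lambda>i. if i < j then r!i else q!i) [0..<k]" for j
    have lw: "length (w j) = k" for j unfolding w_def by simp
    have w0: "w 0 = q" unfolding w_def using q map_nth[of q] by simp
    have wk: "w k = r" unfolding w_def using r by (intro nth_equalityI) auto
    have wS: "j < k \<Longrightarrow> w (Suc j) = (w j)[j := r!j]" for j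
      unfolding w_def by (rule nth_equalityI) (auto simp: nth_list_update)
    have wj: "j < k \<Longrightarrow> (w j)[j := q!j] = w j" for j
      unfolding w_def by (rule nth_equalityI) (auto simp: nth_list_update)
    have step: "\<bar>g (w j) - g (w (Suc j))\<bar> \<le> B j * \<bar>q!j - r!j\<bar>" if jk: "j < k" for j
    proof -
      have "\<bar>g ((w j)[j := q!j]) - g ((w j)[j := r!j])\<bar> \<le> B j * \<bar>q!j - r!j\<bar>"
      proof (rule mvt_abs[where f="\<lambda>t. g ((w j)[j := t])" and f'="\<lambda>t. partial j g ((w j)[j:=t])"])
        fix t assume t: "min (q!j) (r!j) \<le> t" "t \<le> max (q!j) (r!j)"
        show "((\<lambda>t. g ((w j)[j := t])) has_real_derivative partial j g ((w j)[j:=t])) (at t) \<and>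
          \<bar>partial j g ((w j)[j:=t])\<bar> \<le> B j"
        proof
          show "((\<lambda>t. g ((w j)[j := t])) has_real_derivative partial j g ((w j)[j:=t])) (at t)"
            using smooth_deriv[OF sm lw jk] .
          have "\<bar>t - p!j\<bar> < d" using t qd[rule_format, OF jk] rd[rule_format, OF jk] by (cases "q!j \<le> r!j") (auto simp: min_def max_def abs_less_iff)
          then have "\<forall>i<k. \<bar>((w j)[j:=t]) ! i - p ! i\<bar> < dd j"
          proof (intro allI impI)
            fix i assume ik: "i < k"
            show "\<bar>((w j)[j:=t]) ! i - p ! i\<bar> < dd j"
            proof (cases "i = j")
              case True
              then show ?thesis using lw[of j] jk \<open>\<bar>t - p!j\<bar> < d\<close> dle[OF jk] by simp
            next
              case False
              then have "((w j)[j:=t]) ! i = (if i < j then r!i else q!i)"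
                unfolding w_def using ik by simp
              then show ?thesis using qd rd ik dle[OF jk] by auto
            qed
          qed
          then have "\<bar>partial j g ((w j)[j:=t]) - partial j g p\<bar> < 1"
            using dd jk lw by auto
          then show "\<bar>partial j g ((w j)[j:=t])\<bar> \<le> B j" unfolding B_def by linarith
        qed
      qed
      then show ?thesis using wS[OF jk] wj[OF jk] by simp
    qed
    have "\<bar>g q - g (w j)\<bar> \<le> K * (\<Sum>i<j. \<bar>q!i - r!i\<bar>)" if "j \<le> k" for j
      using that
    proof (induction j)
      case 0 then show ?case using w0 by simp
    next
      case (Suc j)
      then have jk: "j < k" by simp
      have "\<bar>g q - g (w (Suc j))\<bar> \<le> \<bar>g q - g (w j)\<bar> + \<bar>g (w j) - g (w (Suc j))\<bar>" by linarith
      also have "\<dots> \<le> K * (\<Sum>i<j. \<bar>q!i - r!i\<bar>) + B j * \<bar>q!j - r!j\<bar>"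
        using Suc step[OF jk] by (intro add_mono) auto
      also have "\<dots> \<le> K * (\<Sum>i<j. \<bar>q!i - r!i\<bar>) + K * \<bar>q!j - r!j\<bar>"
        using BK[OF jk] by (intro add_left_mono mult_right_mono) auto
      finally show ?case by (simp add: algebra_simps)
    qed
    from this[of k] show ?thesis using wk by simp
  qed
  show ?thesis using d0 K0 main by blast
qed



fun idx :: "ident list \<Rightarrow> ident \<Rightarrow> nat" where
  "idx [] x = 0"
| "idx (y#ys) x = (if x = y then 0 else Suc (idx ys x))"

lemma idx_lt: "x \<in> set xs \<Longrightarrow> idx xs x < length xs"
  by (induction xs) auto

lemma nth_idx: "x \<in> set xs \<Longrightarrow> xs ! idx xs x = x"
  by (induction xs) auto

lemma idx_nth: "distinct xs \<Longrightarrow> i < length xs \<Longrightarrow> idx xs (xs!i) = i"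
proof (induction xs arbitrary: i)
  case Nil then show ?case by simp
next
  case (Cons y ys)
  then show ?case by (cases i) (auto simp: nth_mem)
qed

definition st :: "ident list \<Rightarrow> state \<Rightarrow> (nat \<Rightarrow> real) \<Rightarrow> state" where
  "st xs \<nu> z v = (case v of V x \<Rightarrow> if x \<in> set xs then z (idx xs x) else \<nu> v | D x \<Rightarrow> \<nu> v)"

lemma st_V_nth: "distinct xs \<Longrightarrow> i < length xs \<Longrightarrow> st xs \<nu> z (V (xs!i)) = z i"
  unfolding st_def by (simp add: idx_nth nth_mem)

lemma st_other: "v \<notin> V ` set xs \<Longrightarrow> st xs \<nu> z v = \<nu> v"
  unfolding st_def by (cases v) auto

definition dn :: "nat \<Rightarrow> (nat \<Rightarrow> real) \<Rightarrow> (nat \<Rightarrow> real) \<Rightarrow> real" where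
  "dn n z w = Max (insert 0 ((\<lambda>i. \<bar>z i - w i\<bar>) ` {..<n}))"

lemma dn_ge: "i < n \<Longrightarrow> \<bar>z i - w i\<bar> \<le> dn n z w"
  unfolding dn_def by (rule Max_ge) auto

lemma dn_nonneg: "0 \<le> dn n z w"
  unfolding dn_def by (rule Max_ge) auto

lemma dn_le: "0 \<le> B \<Longrightarrow> (\<And>i. i < n \<Longrightarrow> \<bar>z i - w i\<bar> \<le> B) \<Longrightarrow> dn n z w \<le> B"
  unfolding dn_def by (subst Max_le_iff) auto

lemma dn_self: "dn n z z = 0"
  using dn_le[of 0 n z z] dn_nonneg[of n z z] by simp

lemma dn_sym: "dn n z w = dn n w z"
  unfolding dn_def by (simp add: abs_minus_commute)

lemma dn_tri: "dn n z w \<le> dn n z a + dn n a w"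
proof (rule dn_le)
  show "0 \<le> dn n z a + dn n a w" using dn_nonneg by (simp add: add_nonneg_nonneg)
  fix i assume "i < n"
  then have "\<bar>z i - a i\<bar> \<le> dn n z a" "\<bar>a i - w i\<bar> \<le> dn n a w" by (auto intro: dn_ge)
  then show "\<bar>z i - w i\<bar> \<le> dn n z a + dn n a w" by linarith
qed

lemma tsem_agree: "(\<forall>v\<in>tvars t. s1 v = s2 v) \<Longrightarrow> tsem I t s1 = tsem I t s2"
proof (induction t)
  case (Fn g ts)
  then have "map (\<lambda>t. tsem I t s1) ts = map (\<lambda>t. tsem I t s2) ts" by auto
  then show ?case by (simp only: tsem.simps)
qed auto

lemma st_dn: "\<bar>st xs \<nu> z v - st xs \<nu> w v\<bar> \<le> dn (length xs) z w"
  unfolding st_def by (cases v) (auto simp: dn_nonneg idx_lt intro: dn_ge)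

lemma trm_lip:
  assumes smI: "\<forall>g. smooth (ar g) (I g)"
  shows "wf_trm ar t \<Longrightarrow> \<exists>d>0. \<exists>L\<ge>0. \<forall>z w. dn (length xs) z a < d \<longrightarrow> dn (length xs) w a < d \<longrightarrow>
     \<bar>tsem I t (st xs \<nu> z) - tsem I t (st xs \<nu> w)\<bar> \<le> L * dn (length xs) z w"
proof (induction t)
  case (Var v)
  show ?case by (rule exI[of _ 1], simp, rule exI[of _ 1]) (simp add: st_dn)
next
  case (Const r)
  show ?case by (rule exI[of _ 1], simp, rule exI[of _ 0]) simp
next
  case (Plus t1 t2)
  then obtain d1 L1 d2 L2 where d1: "d1 > 0" "L1 \<ge> 0" and h1: "\<forall>z w. dn (length xs) z a < d1 \<longrightarrow> dn (length xs) w a < d1 \<longrightarrow>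
     \<bar>tsem I t1 (st xs \<nu> z) - tsem I t1 (st xs \<nu> w)\<bar> \<le> L1 * dn (length xs) z w"
    and d2: "d2 > 0" "L2 \<ge> 0" and h2: "\<forall>z w. dn (length xs) z a < d2 \<longrightarrow> dn (length xs) w a < d2 \<longrightarrow>
     \<bar>tsem I t2 (st xs \<nu> z) - tsem I t2 (st xs \<nu> w)\<bar> \<le> L2 * dn (length xs) z w"
    by auto
  show ?case
  proof (intro exI conjI allI impI)
    show "min d1 d2 > 0" "L1 + L2 \<ge> 0" using d1 d2 by auto
    fix z w assume "dn (length xs) z a < min d1 d2" "dn (length xs) w a < min d1 d2"
    then have "\<bar>tsem I t1 (st xs \<nu> z) - tsem I t1 (st xs \<nu> w)\<bar> \<le> L1 * dn (length xs) z w"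
      "\<bar>tsem I t2 (st xs \<nu> z) - tsem I t2 (st xs \<nu> w)\<bar> \<le> L2 * dn (length xs) z w"
      using h1 h2 by auto
    then show "\<bar>tsem I (Plus t1 t2) (st xs \<nu> z) - tsem I (Plus t1 t2) (st xs \<nu> w)\<bar> \<le> (L1 + L2) * dn (length xs) z w"
      by (simp add: algebra_simps)
  qed
next
  case (Times t1 t2)
  then obtain d1 L1 d2 L2 where d1: "d1 > 0" "L1 \<ge> 0" and h1: "\<forall>z w. dn (length xs) z a < d1 \<longrightarrow> dn (length xs) w a < d1 \<longrightarrow>
     \<bar>tsem I t1 (st xs \<nu> z) - tsem I t1 (st xs \<nu> w)\<bar> \<le> L1 * dn (length xs) z w"
    and d2: "d2 > 0" "L2 \<ge> 0" and h2: "\<forall>z w. dn (length xs) z a < d2 \<longrightarrow> dn (length xs) w a < d2 \<longrightarrow>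
     \<bar>tsem I t2 (st xs \<nu> z) - tsem I t2 (st xs \<nu> w)\<bar> \<le> L2 * dn (length xs) z w"
    by auto
  define G1 where "G1 z = tsem I t1 (st xs \<nu> z)" for z
  define G2 where "G2 z = tsem I t2 (st xs \<nu> z)" for z
  define M1 where "M1 = \<bar>G1 a\<bar> + L1 * d1"
  define M2 where "M2 = \<bar>G2 a\<bar> + L2 * d2"
  have M0: "M1 \<ge> 0" "M2 \<ge> 0" unfolding M1_def M2_def using d1 d2 by auto
  have b1: "\<bar>G1 z\<bar> \<le> M1" if "dn (length xs) z a < d1" for z
  proof -
    have "\<bar>G1 z - G1 a\<bar> \<le> L1 * dn (length xs) z a" using h1 that d1 dn_self[of _ a] unfolding G1_def by auto
    also have "\<dots> \<le> L1 * d1" using that d1 by (intro mult_left_mono) auto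
    finally show ?thesis unfolding M1_def by linarith
  qed
  have b2: "\<bar>G2 z\<bar> \<le> M2" if "dn (length xs) z a < d2" for z
  proof -
    have "\<bar>G2 z - G2 a\<bar> \<le> L2 * dn (length xs) z a" using h2 that d2 dn_self[of _ a] unfolding G2_def by auto
    also have "\<dots> \<le> L2 * d2" using that d2 by (intro mult_left_mono) auto
    finally show ?thesis unfolding M2_def by linarith
  qed
  show ?case
  proof (intro exI conjI allI impI)
    show "min d1 d2 > 0" "M1 * L2 + M2 * L1 \<ge> 0" using d1 d2 M0 by auto
    fix z w assume z: "dn (length xs) z a < min d1 d2" and w: "dn (length xs) w a < min d1 d2"
    then have e1: "\<bar>G1 z - G1 w\<bar> \<le> L1 * dn (length xs) z w"
      and e2: "\<bar>G2 z - G2 w\<bar> \<le> L2 * dn (length xs) z w"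
      using h1 h2 unfolding G1_def G2_def by auto
    have "G1 z * G2 z - G1 w * G2 w = G1 z * (G2 z - G2 w) + G2 w * (G1 z - G1 w)"
      by (simp add: algebra_simps)
    then have "\<bar>G1 z * G2 z - G1 w * G2 w\<bar> \<le> \<bar>G1 z\<bar> * \<bar>G2 z - G2 w\<bar> + \<bar>G2 w\<bar> * \<bar>G1 z - G1 w\<bar>"
      by (metis abs_mult abs_triangle_ineq)
    also have "\<dots> \<le> M1 * (L2 * dn (length xs) z w) + M2 * (L1 * dn (length xs) z w)"
      using b1[of z] b2[of w] z w e1 e2 M0
      by (intro add_mono mult_mono) auto
    finally show "\<bar>tsem I (Times t1 t2) (st xs \<nu> z) - tsem I (Times t1 t2) (st xs \<nu> w)\<bar> \<le> (M1 * L2 + M2 * L1) * dn (length xs) z w"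
      unfolding G1_def G2_def by (simp add: algebra_simps)
  qed
next
  case (Fn g ts)
  define m where "m = length ts"
  have wf: "m = ar g" "\<forall>t\<in>set ts. wf_trm ar t" using Fn.prems unfolding m_def by auto
  have "\<forall>j\<in>{..<m}. \<exists>d. d > 0 \<and> (\<exists>L\<ge>0. \<forall>z w. dn (length xs) z a < d \<longrightarrow> dn (length xs) w a < d \<longrightarrow>
     \<bar>tsem I (ts!j) (st xs \<nu> z) - tsem I (ts!j) (st xs \<nu> w)\<bar> \<le> L * dn (length xs) z w)"
    using Fn.IH wf unfolding m_def by (auto simp: nth_mem)
  then obtain dd where dd: "\<forall>j\<in>{..<m}. dd j > 0 \<and> (\<exists>L\<ge>0. \<forall>z w. dn (length xs) z a < dd j \<longrightarrow> dn (length xs) w a < dd j \<longrightarrow>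
     \<bar>tsem I (ts!j) (st xs \<nu> z) - tsem I (ts!j) (st xs \<nu> w)\<bar> \<le> L * dn (length xs) z w)"
    by (rule bchoice[THEN exE]) blast
  then have "\<forall>j\<in>{..<m}. \<exists>L. L \<ge> 0 \<and> (\<forall>z w. dn (length xs) z a < dd j \<longrightarrow> dn (length xs) w a < dd j \<longrightarrow>
     \<bar>tsem I (ts!j) (st xs \<nu> z) - tsem I (ts!j) (st xs \<nu> w)\<bar> \<le> L * dn (length xs) z w)"
    by blast
  then obtain LL where LL: "\<forall>j\<in>{..<m}. LL j \<ge> 0 \<and> (\<forall>z w. dn (length xs) z a < dd j \<longrightarrow> dn (length xs) w a < dd j \<longrightarrow>
     \<bar>tsem I (ts!j) (st xs \<nu> z) - tsem I (ts!j) (st xs \<nu> w)\<bar> \<le> LL j * dn (length xs) z w)"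
    by (rule bchoice[THEN exE]) blast
  define p where "p = map (\<lambda>t. tsem I t (st xs \<nu> a)) ts"
  have lp: "length p = ar g" unfolding p_def using wf m_def by simp
  obtain \<delta> K where \<delta>: "\<delta> > 0" "K \<ge> 0" and hK: "\<forall>q r. length q = ar g \<longrightarrow> length r = ar g \<longrightarrow>
     (\<forall>i<ar g. \<bar>q!i - p!i\<bar> < \<delta>) \<longrightarrow> (\<forall>i<ar g. \<bar>r!i - p!i\<bar> < \<delta>) \<longrightarrow>
     \<bar>I g q - I g r\<bar> \<le> K * (\<Sum>i<ar g. \<bar>q!i - r!i\<bar>)"
    using smooth_lip[OF smI[rule_format, of g] lp] by blast
  define Ls where "Ls = (\<Sum>j<m. LL j)"
  have Ls0: "Ls \<ge> 0" unfolding Ls_def using LL by (intro sum_nonneg) auto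
  have LLs: "j < m \<Longrightarrow> LL j \<le> Ls" for j unfolding Ls_def using LL by (intro member_le_sum) auto
  define d0 where "d0 = Min (insert 1 (dd ` {..<m}))"
  have d00: "d0 > 0" unfolding d0_def using dd by (subst Min_gr_iff) auto
  have d0le: "j < m \<Longrightarrow> d0 \<le> dd j" for j unfolding d0_def by (rule Min_le) auto
  define d where "d = min d0 (\<delta> / (Ls + 1))"
  have d_pos: "d > 0" unfolding d_def using d00 \<delta> Ls0 by auto
  define qq where "qq z = map (\<lambda>t. tsem I t (st xs \<nu> z)) ts" for z
  have lq: "length (qq z) = ar g" for z unfolding qq_def using wf m_def by simp
  have jl: "\<bar>qq z ! j - qq w ! j\<bar> \<le> LL j * dn (length xs) z w"
    if "dn (length xs) z a < d" "dn (length xs) w a < d" "j < ar g" for z w j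
  proof -
    have jm: "j < m" using that wf by simp
    have "dn (length xs) z a < dd j" "dn (length xs) w a < dd j"
      using that d0le[OF jm] unfolding d_def by auto
    then have "\<bar>tsem I (ts ! j) (st xs \<nu> z) - tsem I (ts ! j) (st xs \<nu> w)\<bar> \<le> LL j * dn (length xs) z w"
      using LL jm by blast
    then show ?thesis unfolding qq_def using jm m_def by simp
  qed
  have near: "\<bar>qq z ! j - p ! j\<bar> < \<delta>" if z: "dn (length xs) z a < d" and j: "j < ar g" for z j
  proof -
    have "p = qq a" unfolding p_def qq_def ..
    then have "\<bar>qq z ! j - p ! j\<bar> \<le> LL j * dn (length xs) z a"
      using jl[OF z _ j, of a] d_pos dn_self[of _ a] by auto
    also have "\<dots> \<le> (Ls + 1) * dn (length xs) z a"
      using LLs[of j] wf j dn_nonneg by (intro mult_right_mono) auto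
    also have "\<dots> < (Ls + 1) * (\<delta> / (Ls + 1))"
      using z Ls0 unfolding d_def by (intro mult_strict_left_mono) auto
    also have "\<dots> = \<delta>" using Ls0 by simp
    finally show ?thesis .
  qed
  show ?case
  proof (intro exI conjI allI impI)
    show "d > 0" by (rule d_pos)
    show "K * Ls \<ge> 0" using \<delta> Ls0 by simp
    fix z w assume z: "dn (length xs) z a < d" and w: "dn (length xs) w a < d"
    have "\<bar>I g (qq z) - I g (qq w)\<bar> \<le> K * (\<Sum>j<ar g. \<bar>qq z!j - qq w!j\<bar>)"
      using hK lq near z w by blast
    also have "\<dots> \<le> K * (\<Sum>j<ar g. LL j * dn (length xs) z w)"
      using jl[OF z w] \<delta> by (intro mult_left_mono sum_mono) auto
    also have "\<dots> = K * Ls * dn (length xs) z w"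
      unfolding Ls_def wf(1)[symmetric] by (simp add: sum_distrib_right)
    finally show "\<bar>tsem I (Fn g ts) (st xs \<nu> z) - tsem I (Fn g ts) (st xs \<nu> w)\<bar> \<le> K * Ls * dn (length xs) z w"
      unfolding qq_def by simp
  qed
qed



lemma ode_exists:
  fixes F :: "'b::banach \<Rightarrow> 'b" and a :: 'b
  assumes r: "r > 0" and Mb: "\<forall>z\<in>cball a r. norm (F z) \<le> M"
    and Lb: "\<forall>z\<in>cball a r. \<forall>w\<in>cball a r. norm (F z - F w) \<le> L * norm (z - w)"
  shows "\<exists>h>0. \<exists>u. u 0 = a \<and> (\<forall>t\<in>{0..h}. u t \<in> cball a r \<and>
           (u has_vector_derivative F (u t)) (at t within {0..h}))"
proof -
  define M' where "M' = max M 1"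
  define L' where "L' = max L 1"
  have M'0: "M' > 0" "M \<le> M'" and L'0: "L' > 0" "L \<le> L'" unfolding M'_def L'_def by auto
  define h where "h = min (r / M') (1 / (2 * L'))"
  have h0: "h > 0" unfolding h_def using r M'0 L'0 by auto
  have hM: "h * M' \<le> r"
  proof -
    have "h \<le> r / M'" unfolding h_def by (rule min.cobounded1)
    then show ?thesis using pos_le_divide_eq[OF M'0(1)] by blast
  qed
  have hL: "h * L' \<le> 1/2"
  proof -
    have "h \<le> 1 / (2 * L')" unfolding h_def by (rule min.cobounded2)
    moreover have "2 * L' > 0" using L'0 by simp
    ultimately have "h * (2 * L') \<le> 1" using pos_le_divide_eq by blast
    moreover have "h * (2 * L') = 2 * (h * L')" by simp
    ultimately show ?thesis by linarith
  qed
  have Lb': "norm (F z - F w) \<le> L' * norm (z - w)" if "z \<in> cball a r" "w \<in> cball a r" for z w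
  proof -
    have "norm (F z - F w) \<le> L * norm (z - w)" using Lb that by blast
    also have "\<dots> \<le> L' * norm (z - w)" using L'0 by (intro mult_right_mono) auto
    finally show ?thesis .
  qed
  have Fcont: "continuous_on (cball a r) F"
    by (rule lipschitz_on_continuous_on[of L']) (use Lb' L'0 in \<open>auto simp: lipschitz_on_def dist_norm\<close>)
  define cl where "cl t = max 0 (min h t)" for t
  have cl_in: "cl t \<in> {0..h}" for t unfolding cl_def using h0 by auto
  have cl_id: "t \<in> {0..h} \<Longrightarrow> cl t = t" for t unfolding cl_def by auto
  have cl_cont: "continuous_on UNIV cl" unfolding cl_def by (intro continuous_intros)
  define S where "S = PiC UNIV (\<lambda>_::real. cball a r)"
  have S_iff: "u \<in> S \<longleftrightarrow> (\<forall>t. apply_bcontfun u t \<in> cball a r)" for u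
    unfolding S_def mem_PiC_iff by auto
  have S_closed: "closed S" unfolding S_def by (rule closed_PiC) auto
  have S_complete: "complete S" using S_closed complete_eq_closed by blast
  have S_ne: "S \<noteq> {}"
  proof -
    have "const_bcontfun a \<in> S" unfolding S_iff using r by simp
    then show ?thesis by blast
  qed
  have gcont: "continuous_on {0..h} (\<lambda>s. F (apply_bcontfun u s))" if "u \<in> S" for u
    using that unfolding S_iff
    by (intro continuous_on_compose2[OF Fcont]) auto
  have gint: "(\<lambda>s. F (apply_bcontfun u s)) integrable_on {0..x}" if "u \<in> S" "x \<in> {0..h}" for u x
    using gcont[OF that(1)] that(2) by (intro integrable_continuous_interval) (auto elim: continuous_on_subset)
  have ibound: "norm (integral {0..x} (\<lambda>s. F (apply_bcontfun u s))) \<le> r" if "u \<in> S" "x \<in> {0..h}" for u x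
  proof -
    have "norm (integral {0..x} (\<lambda>s. F (apply_bcontfun u s))) \<le> M' * (x - 0)"
    proof (rule integral_bound)
      show "0 \<le> x" using that by auto
      show "continuous_on {0..x} (\<lambda>s. F (apply_bcontfun u s))"
        using gcont[OF that(1)] that(2) by (auto elim: continuous_on_subset)
      fix t assume "t \<in> {0..x}"
      then have "apply_bcontfun u t \<in> cball a r" using that S_iff by auto
      then show "norm (F (apply_bcontfun u t)) \<le> M'" using Mb M'0 by force
    qed
    also have "\<dots> \<le> M' * h" using that M'0 by (intro mult_left_mono) auto
    also have "\<dots> \<le> r" using hM by (simp add: mult.commute)
    finally show ?thesis .
  qed
  define \<Phi>f where "\<Phi>f u t = a + integral {0..cl t} (\<lambda>s. F (apply_bcontfun u s))" for u t
  have \<Phi>f_bc: "\<Phi>f u \<in> bcontfun" if u: "u \<in> S" for u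
  proof -
    have c1: "continuous_on {0..h} (\<lambda>x. integral {0..x} (\<lambda>s. F (apply_bcontfun u s)))"
      by (rule indefinite_integral_continuous_1) (use gint[OF u, of h] h0 in auto)
    have "continuous_on UNIV (\<Phi>f u)" unfolding \<Phi>f_def
      by (intro continuous_intros continuous_on_compose2[OF c1 cl_cont]) (use cl_in in auto)
    moreover have "range (\<Phi>f u) \<subseteq> cball a r"
      unfolding \<Phi>f_def using ibound[OF u cl_in] by (auto simp: dist_norm)
    then have "bounded (range (\<Phi>f u))" using bounded_cball bounded_subset by blast
    ultimately show ?thesis unfolding bcontfun_def by simp
  qed
  define \<Phi> where "\<Phi> u = Bcontfun (\<Phi>f u)" for u
  have \<Phi>_app: "apply_bcontfun (\<Phi> u) t = \<Phi>f u t" if "u \<in> S" for u t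
    unfolding \<Phi>_def using \<Phi>f_bc[OF that] by (simp add: Bcontfun_inverse)
  have \<Phi>S: "\<Phi> ` S \<subseteq> S"
  proof
    fix v assume "v \<in> \<Phi> ` S"
    then obtain u where u: "u \<in> S" "v = \<Phi> u" by blast
    show "v \<in> S" unfolding S_iff u(2) \<Phi>_app[OF u(1)] \<Phi>f_def
      using ibound[OF u(1) cl_in] by (auto simp: dist_norm)
  qed
  have contr: "dist (\<Phi> u) (\<Phi> v) \<le> (1/2) * dist u v" if u: "u \<in> S" and v: "v \<in> S" for u v
  proof (rule dist_bound)
    fix t
    have "dist (apply_bcontfun (\<Phi> u) t) (apply_bcontfun (\<Phi> v) t)
        = norm (integral {0..cl t} (\<lambda>s. F (apply_bcontfun u s) - F (apply_bcontfun v s)))"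
      unfolding \<Phi>_app[OF u] \<Phi>_app[OF v] \<Phi>f_def dist_norm
      by (subst integral_diff) (use gint[OF u cl_in] gint[OF v cl_in] in auto)
    also have "\<dots> \<le> (L' * dist u v) * (cl t - 0)"
    proof (rule integral_bound)
      show "0 \<le> cl t" using cl_in by auto
      show "continuous_on {0..cl t} (\<lambda>s. F (apply_bcontfun u s) - F (apply_bcontfun v s))"
        using gcont[OF u] gcont[OF v] cl_in[of t]
        by (intro continuous_intros) (auto elim: continuous_on_subset)
      fix s
      have "norm (F (apply_bcontfun u s) - F (apply_bcontfun v s)) \<le> L' * norm (apply_bcontfun u s - apply_bcontfun v s)"
        using u v S_iff Lb' by blast
      also have "\<dots> \<le> L' * dist u v"
        using dist_bounded[of u s v] L'0 by (intro mult_left_mono) (auto simp: dist_norm)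
      finally show "norm (F (apply_bcontfun u s) - F (apply_bcontfun v s)) \<le> L' * dist u v" .
    qed
    also have "\<dots> \<le> (L' * dist u v) * h"
      using cl_in[of t] L'0 by (intro mult_left_mono) auto
    also have "\<dots> = (h * L') * dist u v" by simp
    also have "\<dots> \<le> (1/2) * dist u v" using hL by (intro mult_right_mono) auto
    finally show "dist (apply_bcontfun (\<Phi> u) t) (apply_bcontfun (\<Phi> v) t) \<le> (1/2) * dist u v" .
  qed
  obtain u where u: "u \<in> S" "\<Phi> u = u"
    using Banach_fix[OF S_complete S_ne _ _ \<Phi>S contr] by auto
  have ueq: "apply_bcontfun u t = a + integral {0..t} (\<lambda>s. F (apply_bcontfun u s))" if "t \<in> {0..h}" for t
    using \<Phi>_app[OF u(1), of t] u(2) cl_id[OF that] unfolding \<Phi>f_def by simp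
  show ?thesis
  proof (intro exI conjI ballI)
    show "h > 0" by (rule h0)
    show "apply_bcontfun u 0 = a" using ueq[of 0] h0 by simp
    fix t assume t: "t \<in> {0..h}"
    show "apply_bcontfun u t \<in> cball a r" using u(1) S_iff by auto
    have iv: "((\<lambda>t. integral {0..t} (\<lambda>s. F (apply_bcontfun u s))) has_vector_derivative F (apply_bcontfun u t)) (at t within {0..h})"
      by (rule integral_has_vector_derivative[OF gcont[OF u(1)] t])
    have "((\<lambda>t. a + integral {0..t} (\<lambda>s. F (apply_bcontfun u s))) has_vector_derivative F (apply_bcontfun u t)) (at t within {0..h})"
      using has_vector_derivative_add[OF has_vector_derivative_const iv, of a] by simp
    then show "(apply_bcontfun u has_vector_derivative F (apply_bcontfun u t)) (at t within {0..h})"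
      by (rule has_vector_derivative_transform_within[where d=1]) (use t ueq in auto)
  qed
qed



instance bcontfun :: (metric_space, banach) banach ..

lemma bl_app: "bounded_linear (\<lambda>Z::real \<Rightarrow>\<^sub>C real. apply_bcontfun Z x)"
  by (rule bounded_linear_intro[where K=1]) (auto, metis norm_bounded real_norm_def)

lemma tsem_agreeV: "dfree t \<Longrightarrow> (\<And>x. V x \<in> tvars t \<Longrightarrow> s1 (V x) = s2 (V x)) \<Longrightarrow> tsem I t s1 = tsem I t s2"
  by (rule tsem_agree) (metis dfree_def var.exhaust)

definition hat :: "nat \<Rightarrow> real \<Rightarrow> real" where
  "hat i t = max 0 (1 - \<bar>t - real i\<bar>)"

lemma hat_nonneg: "0 \<le> hat i t" unfolding hat_def by simp

lemma hat_le1: "hat i t \<le> 1" unfolding hat_def by simp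

lemma hat_nat: "hat i (real j) = (if i = j then 1 else 0)"
proof (cases "i = j")
  case False
  then have "\<bar>real j - real i\<bar> \<ge> 1" by linarith
  then show ?thesis using False unfolding hat_def by simp
qed (simp add: hat_def)

lemma hat_sum_bound: "\<bar>\<Sum>i<n. c i * hat i t\<bar> \<le> (\<Sum>i<n. \<bar>c i\<bar>)"
proof -
  have "\<bar>\<Sum>i<n. c i * hat i t\<bar> \<le> (\<Sum>i<n. \<bar>c i * hat i t\<bar>)" by (rule sum_abs)
  also have "\<dots> \<le> (\<Sum>i<n. \<bar>c i\<bar>)"
  proof (rule sum_mono)
    fix i
    have "\<bar>c i * hat i t\<bar> = \<bar>c i\<bar> * hat i t" using hat_nonneg by (simp add: abs_mult)
    also have "\<dots> \<le> \<bar>c i\<bar> * 1" using hat_le1 by (intro mult_left_mono) auto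
    finally show "\<bar>c i * hat i t\<bar> \<le> \<bar>c i\<bar>" by simp
  qed
  finally show ?thesis .
qed

lemma fvec_bc: "(\<lambda>t. \<Sum>i<n. g i * hat i t) \<in> bcontfun"
proof (rule bcontfun_normI)
  show "continuous_on UNIV (\<lambda>t. \<Sum>i<n. g i * hat i t)"
    unfolding hat_def by (intro continuous_intros)
  fix t show "norm (\<Sum>i<n. g i * hat i t) \<le> (\<Sum>i<n. \<bar>g i\<bar>)"
    using hat_sum_bound by simp
qed

definition fvec :: "nat \<Rightarrow> (nat \<Rightarrow> real) \<Rightarrow> (real \<Rightarrow>\<^sub>C real)" where
  "fvec n g = Bcontfun (\<lambda>t. \<Sum>i<n. g i * hat i t)"

lemma fvec_app: "apply_bcontfun (fvec n g) t = (\<Sum>i<n. g i * hat i t)"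
  unfolding fvec_def by (subst Bcontfun_inverse[OF fvec_bc]) simp

lemma fvec_comp: "j < n \<Longrightarrow> apply_bcontfun (fvec n g) (real j) = g j"
  unfolding fvec_app hat_nat by (simp add: if_distrib cong: if_cong)

definition comp :: "(real \<Rightarrow>\<^sub>C real) \<Rightarrow> nat \<Rightarrow> real" where
  "comp Z i = apply_bcontfun Z (real i)"

lemma dn_norm: "dn n (comp Z) (comp W) \<le> norm (Z - W)"
proof (rule dn_le)
  show "0 \<le> norm (Z - W)" by simp
  fix i
  have "\<bar>apply_bcontfun (Z - W) (real i)\<bar> \<le> norm (Z - W)" using norm_bounded[of "Z - W" "real i"] by simp
  then show "\<bar>comp Z i - comp W i\<bar> \<le> norm (Z - W)" by (simp add: comp_def)
qed

locale odectx =
  fixes I :: "nat \<Rightarrow> real list \<Rightarrow> real" and ar :: "nat \<Rightarrow> nat"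
    and xs :: "ident list" and fs :: "trm list"
  assumes smoothI: "\<forall>g. smooth (ar g) (I g)"
    and xs_dist: "distinct xs"
    and fs_len: "length fs = length xs"
    and fs_terms: "\<forall>t\<in>set fs. wf_trm ar t \<and> dfree t"
begin

definition sol :: "(real \<Rightarrow> state) \<Rightarrow> real \<Rightarrow> (state \<Rightarrow> bool) \<Rightarrow> bool" where
  "sol \<phi> T Q \<longleftrightarrow> (\<forall>\<zeta>\<in>{0..T}.
          (\<forall>i<length xs. \<phi> \<zeta> (D (xs ! i)) = tsem I (fs ! i) (\<phi> \<zeta>)) \<and> Q (\<phi> \<zeta>) \<and>
          (\<forall>v. v \<notin> V ` set xs \<and> v \<notin> D ` set xs \<longrightarrow> \<phi> \<zeta> v = \<phi> 0 v) \<and>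
          (T > 0 \<longrightarrow> (\<forall>i<length xs.
              ((\<lambda>t. \<phi> t (V (xs ! i))) has_real_derivative \<phi> \<zeta> (D (xs ! i))) (at \<zeta> within {0..T}))))"

lemma ode_rel_sol: "ode_rel I xs fs Q \<omega> \<nu> \<longleftrightarrow>
   (\<exists>T\<ge>0. \<exists>\<phi>. (\<forall>v. v \<notin> D ` set xs \<longrightarrow> \<phi> 0 v = \<omega> v) \<and> \<phi> T = \<nu> \<and> sol \<phi> T Q)"
  unfolding ode_rel_def sol_def by blast

lemma fs_dfree: "i < length xs \<Longrightarrow> dfree (fs ! i)"
  using fs_terms fs_len by (metis nth_mem)

lemma fs_wf: "i < length xs \<Longrightarrow> wf_trm ar (fs ! i)"
  using fs_terms fs_len by (metis nth_mem)

lemma exists_sol: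
  "\<exists>h>0. \<exists>\<phi>. (\<forall>v. v \<notin> D ` set xs \<longrightarrow> \<phi> 0 v = \<nu> v) \<and> sol \<phi> h (\<lambda>_. True)"
proof -
  define n where "n = length xs"
  define G where "G i z = tsem I (fs!i) (st xs \<nu> z)" for i z
  define a where "a = fvec n (\<lambda>i. \<nu> (V (xs!i)))"
  define F where "F Z = fvec n (\<lambda>i. G i (comp Z))" for Z
  have "\<forall>i\<in>{..<n}. \<exists>d. d > 0 \<and> (\<exists>L\<ge>0. \<forall>z w. dn n z (comp a) < d \<longrightarrow> dn n w (comp a) < d \<longrightarrow>
     \<bar>G i z - G i w\<bar> \<le> L * dn n z w)"
    using trm_lip[OF smoothI fs_wf] unfolding G_def n_def by blast
  then obtain dd where dd: "\<forall>i\<in>{..<n}. dd i > 0 \<and> (\<exists>L\<ge>0. \<forall>z w. dn n z (comp a) < dd i \<longrightarrow> dn n w (comp a) < dd i \<longrightarrow>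
     \<bar>G i z - G i w\<bar> \<le> L * dn n z w)"
    by (rule bchoice[THEN exE]) blast
  then have "\<forall>i\<in>{..<n}. \<exists>L. L \<ge> 0 \<and> (\<forall>z w. dn n z (comp a) < dd i \<longrightarrow> dn n w (comp a) < dd i \<longrightarrow>
     \<bar>G i z - G i w\<bar> \<le> L * dn n z w)"
    by blast
  then obtain LL where LL: "\<forall>i\<in>{..<n}. LL i \<ge> 0 \<and> (\<forall>z w. dn n z (comp a) < dd i \<longrightarrow> dn n w (comp a) < dd i \<longrightarrow>
     \<bar>G i z - G i w\<bar> \<le> LL i * dn n z w)"
    by (rule bchoice[THEN exE]) blast
  define d0 where "d0 = Min (insert 1 (dd ` {..<n}))"
  have d00: "d0 > 0" unfolding d0_def using dd by (subst Min_gr_iff) auto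
  have d0le: "i < n \<Longrightarrow> d0 \<le> dd i" for i unfolding d0_def by (rule Min_le) auto
  define r where "r = d0 / 2"
  have r0: "r > 0" unfolding r_def using d00 by simp
  define Ls where "Ls = (\<Sum>i<n. LL i)"
  have Ls0: "Ls \<ge> 0" unfolding Ls_def using LL by (intro sum_nonneg) auto
  have LLs: "i < n \<Longrightarrow> LL i \<le> Ls" for i unfolding Ls_def using LL by (intro member_le_sum) auto
  have inball: "dn n (comp Z) (comp a) < dd i" if "Z \<in> cball a r" "i < n" for Z i
  proof -
    have "dn n (comp Z) (comp a) \<le> norm (Z - a)" by (rule dn_norm)
    also have "\<dots> \<le> r" using that by (simp add: dist_norm norm_minus_commute)
    also have "\<dots> < d0" unfolding r_def using d00 by simp
    also have "\<dots> \<le> dd i" using d0le that by simp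
    finally show ?thesis .
  qed
  have FL: "norm (F Z - F W) \<le> Ls * norm (Z - W)" if "Z \<in> cball a r" "W \<in> cball a r" for Z W
  proof (rule norm_bound)
    fix t
    have "apply_bcontfun (F Z - F W) t = (\<Sum>i<n. (G i (comp Z) - G i (comp W)) * hat i t)"
      unfolding F_def by (simp add: fvec_app sum_subtractf left_diff_distrib)
    then have "norm (apply_bcontfun (F Z - F W) t) \<le> (\<Sum>i<n. \<bar>G i (comp Z) - G i (comp W)\<bar>)"
      using hat_sum_bound by simp
    also have "\<dots> \<le> (\<Sum>i<n. LL i * norm (Z - W))"
    proof (rule sum_mono)
      fix i assume "i \<in> {..<n}"
      then have i: "i < n" by simp
      have "\<bar>G i (comp Z) - G i (comp W)\<bar> \<le> LL i * dn n (comp Z) (comp W)"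
        using LL inball[OF that(1) i] inball[OF that(2) i] i by blast
      also have "\<dots> \<le> LL i * norm (Z - W)"
        using LL i dn_norm[of n Z W] by (intro mult_left_mono) auto
      finally show "\<bar>G i (comp Z) - G i (comp W)\<bar> \<le> LL i * norm (Z - W)" .
    qed
    also have "\<dots> = Ls * norm (Z - W)" unfolding Ls_def by (simp add: sum_distrib_right)
    finally show "norm (apply_bcontfun (F Z - F W) t) \<le> Ls * norm (Z - W)" .
  qed
  have FM: "norm (F Z) \<le> norm (F a) + Ls * r" if "Z \<in> cball a r" for Z
  proof -
    have "norm (F Z) \<le> norm (F a) + norm (F Z - F a)" by (metis norm_triangle_sub add.commute)
    also have "norm (F Z - F a) \<le> Ls * norm (Z - a)" using FL[OF that] r0 by simp
    also have "\<dots> \<le> Ls * r" using that Ls0 by (intro mult_left_mono) (auto simp: dist_norm norm_minus_commute)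
    finally show ?thesis by simp
  qed
  obtain h U where h0: "h > 0" and U0: "U 0 = a"
    and U: "\<forall>t\<in>{0..h}. U t \<in> cball a r \<and> (U has_vector_derivative F (U t)) (at t within {0..h})"
    using ode_exists[OF r0, where F=F and M="norm (F a) + Ls * r" and L=Ls and a=a] FL FM by blast
  define stD where "stD z v = (case v of V x \<Rightarrow> st xs \<nu> z v
       | D x \<Rightarrow> if x \<in> set xs then G (idx xs x) z else \<nu> v)" for z v
  define \<phi> where "\<phi> t = stD (comp (U t))" for t
  have \<phi>V: "\<phi> t (V (xs!i)) = comp (U t) i" if "i < n" for t i
    unfolding \<phi>_def stD_def using that n_def xs_dist by (simp add: st_V_nth)
  have \<phi>D: "\<phi> t (D (xs!i)) = G i (comp (U t))" if "i < n" for t i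
    unfolding \<phi>_def stD_def using that n_def xs_dist by (simp add: idx_nth nth_mem)
  have \<phi>G: "tsem I (fs!i) (\<phi> t) = G i (comp (U t))" if "i < n" for t i
    unfolding G_def
    by (rule tsem_agreeV[OF fs_dfree]) (use that n_def in \<open>auto simp: \<phi>_def stD_def\<close>)
  have \<phi>O: "\<phi> t v = \<nu> v" if "v \<notin> V ` set xs" "v \<notin> D ` set xs" for t v
    using that unfolding \<phi>_def stD_def by (cases v) (auto simp: st_other)
  show ?thesis
  proof (intro exI conjI allI impI)
    show "h > 0" by (rule h0)
    fix v assume v: "v \<notin> D ` set xs"
    show "\<phi> 0 v = \<nu> v"
    proof (cases v)
      case (V x)
      show ?thesis
      proof (cases "x \<in> set xs")
        case True
        have "\<phi> 0 v = \<phi> 0 (V (xs ! idx xs x))" using V True by (simp add: nth_idx)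
        also have "\<dots> = comp a (idx xs x)" using \<phi>V[of "idx xs x" 0] U0 idx_lt[OF True] n_def by simp
        also have "\<dots> = \<nu> v" unfolding a_def comp_def using fvec_comp idx_lt[OF True] n_def nth_idx[OF True] V by simp
        finally show ?thesis .
      next
        case False then show ?thesis using \<phi>O[of v] V v by auto
      qed
    next
      case (D x)
      then show ?thesis using \<phi>O[of v] v by auto
    qed
  next
    show "sol \<phi> h (\<lambda>_. True)"
      unfolding sol_def
    proof (intro ballI conjI allI impI)
      fix \<zeta> assume z: "\<zeta> \<in> {0..h}"
      fix i assume i: "i < length xs"
      show "\<phi> \<zeta> (D (xs ! i)) = tsem I (fs ! i) (\<phi> \<zeta>)" using \<phi>D \<phi>G i n_def by simp
    next
      fix \<zeta> v assume "\<zeta> \<in> {0..h}" "v \<notin> V ` set xs \<and> v \<notin> D ` set xs"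
      then show "\<phi> \<zeta> v = \<phi> 0 v" using \<phi>O by simp
    next
      fix \<zeta> i assume z: "\<zeta> \<in> {0..h}" and "h > 0" and i: "i < length xs"
      have "((\<lambda>t. apply_bcontfun (U t) (real i)) has_vector_derivative apply_bcontfun (F (U \<zeta>)) (real i)) (at \<zeta> within {0..h})"
        using bounded_linear.has_vector_derivative[OF bl_app] U z by blast
      moreover have "apply_bcontfun (F (U \<zeta>)) (real i) = \<phi> \<zeta> (D (xs ! i))"
        unfolding F_def using fvec_comp \<phi>D i n_def by simp
      moreover have "(\<lambda>t. \<phi> t (V (xs ! i))) = (\<lambda>t. apply_bcontfun (U t) (real i))" using \<phi>V i n_def by (simp add: comp_def)
      ultimately show "((\<lambda>t. \<phi> t (V (xs ! i))) has_real_derivative \<phi> \<zeta> (D (xs ! i))) (at \<zeta> within {0..h})"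
        by (simp add: has_real_derivative_iff_has_vector_derivative)
    qed simp
  qed
qed

end



lemma deriv_shift:
  fixes f :: "real \<Rightarrow> real"
  assumes "(f has_real_derivative Df) (at (x + c) within {a+c..b+c})"
  shows "((\<lambda>s. f (s + c)) has_real_derivative Df) (at x within {a..b})"
proof -
  have img: "(\<lambda>s. s + c) ` {a..b} = {a+c..b+c}"
  proof (rule set_eqI)
    fix y
    show "y \<in> (\<lambda>s. s + c) ` {a..b} \<longleftrightarrow> y \<in> {a+c..b+c}"
    proof
      assume "y \<in> (\<lambda>s. s + c) ` {a..b}"
      then obtain s where "s \<in> {a..b}" "y = s + c" by blast
      then show "y \<in> {a+c..b+c}" by simp
    next
      assume "y \<in> {a+c..b+c}"
      then have "y - c \<in> {a..b}" "y = (y - c) + c" by auto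
      then show "y \<in> (\<lambda>s. s + c) ` {a..b}" by blast
    qed
  qed
  have g0: "((\<lambda>s. s + c) has_real_derivative 1 + 0) (at x within {a..b})"
    by (intro DERIV_add DERIV_ident DERIV_const)
  then have g: "((\<lambda>s. s + c) has_real_derivative 1) (at x within {a..b})" by simp
  have f0: "(f has_real_derivative Df) (at ((\<lambda>s. s + c) x) within ((\<lambda>s. s + c) ` {a..b}))"
    unfolding img using assms by simp
  have "(f \<circ> (\<lambda>s. s + c) has_real_derivative Df * 1) (at x within {a..b})"
    by (rule DERIV_image_chain[OF f0 g])
  then show ?thesis by (simp add: o_def)
qed

lemma deriv_triv:
  fixes f :: "real \<Rightarrow> real"
  assumes "\<not> x islimpt S"
  shows "(f has_real_derivative Df) (at x within S)"
proof -
  have "at x within S = bot" using assms by (simp add: trivial_limit_within)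
  then show ?thesis unfolding has_field_derivative_iff by simp
qed

lemma DERIV_Un:
  fixes f :: "real \<Rightarrow> real"
  assumes "(f has_real_derivative Df) (at x within S)" "(f has_real_derivative Df) (at x within T)"
  shows "(f has_real_derivative Df) (at x within S \<union> T)"
proof -
  have "((\<lambda>y. (f y - f x) / (y - x)) \<longlongrightarrow> Df) (at x within S)"
    "((\<lambda>y. (f y - f x) / (y - x)) \<longlongrightarrow> Df) (at x within T)"
    using assms unfolding has_field_derivative_iff by auto
  then have "((\<lambda>y. (f y - f x) / (y - x)) \<longlongrightarrow> Df) (at x within S \<union> T)"
    using Lim_within_Un by blast
  then show ?thesis unfolding has_field_derivative_iff .
qed

lemma closed_not_limpt: "closed S \<Longrightarrow> x \<notin> S \<Longrightarrow> \<not> x islimpt S"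
  using closed_limpt by blast

lemma not_limpt_right: "x < (a::real) \<Longrightarrow> \<not> x islimpt {a..b}"
  by (rule closed_not_limpt) auto

lemma not_limpt_left: "(b::real) < x \<Longrightarrow> \<not> x islimpt {a..b}"
  by (rule closed_not_limpt) auto

context odectx
begin

lemma solD1: "sol \<phi> T Q \<Longrightarrow> \<zeta> \<in> {0..T} \<Longrightarrow> i < length xs \<Longrightarrow> \<phi> \<zeta> (D (xs ! i)) = tsem I (fs ! i) (\<phi> \<zeta>)"
  unfolding sol_def by blast

lemma solD2: "sol \<phi> T Q \<Longrightarrow> \<zeta> \<in> {0..T} \<Longrightarrow> Q (\<phi> \<zeta>)"
  unfolding sol_def by blast

lemma solD3: "sol \<phi> T Q \<Longrightarrow> \<zeta> \<in> {0..T} \<Longrightarrow> v \<notin> V ` set xs \<Longrightarrow> v \<notin> D ` set xs \<Longrightarrow> \<phi> \<zeta> v = \<phi> 0 v"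
  unfolding sol_def by blast

lemma solD4: "sol \<phi> T Q \<Longrightarrow> \<zeta> \<in> {0..T} \<Longrightarrow> T > 0 \<Longrightarrow> i < length xs \<Longrightarrow>
   ((\<lambda>t. \<phi> t (V (xs ! i))) has_real_derivative \<phi> \<zeta> (D (xs ! i))) (at \<zeta> within {0..T})"
  unfolding sol_def by blast

lemma sol_restrict:
  assumes "sol \<phi> T Q" "0 \<le> T'" "T' \<le> T"
  shows "sol \<phi> T' Q"
  unfolding sol_def
proof (intro ballI conjI)
  fix \<zeta> assume z: "\<zeta> \<in> {0..T'}"
  then have z': "\<zeta> \<in> {0..T}" using assms by auto
  show "\<forall>i<length xs. \<phi> \<zeta> (D (xs ! i)) = tsem I (fs ! i) (\<phi> \<zeta>)" "Q (\<phi> \<zeta>)"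
    "\<forall>v. v \<notin> V ` set xs \<and> v \<notin> D ` set xs \<longrightarrow> \<phi> \<zeta> v = \<phi> 0 v"
    using solD1[OF assms(1) z'] solD2[OF assms(1) z'] solD3[OF assms(1) z'] by auto
  show "0 < T' \<longrightarrow> (\<forall>i<length xs. ((\<lambda>t. \<phi> t (V (xs ! i))) has_real_derivative \<phi> \<zeta> (D (xs ! i))) (at \<zeta> within {0..T'}))"
  proof (intro impI allI)
    fix i assume "0 < T'" "i < length xs"
    then have "((\<lambda>t. \<phi> t (V (xs ! i))) has_real_derivative \<phi> \<zeta> (D (xs ! i))) (at \<zeta> within {0..T})"
      using assms(1,3) z' solD4 by auto
    then show "((\<lambda>t. \<phi> t (V (xs ! i))) has_real_derivative \<phi> \<zeta> (D (xs ! i))) (at \<zeta> within {0..T'})"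
      by (rule DERIV_subset) (use assms in auto)
  qed
qed

lemma sol_shift:
  assumes "sol \<phi> T Q" "0 \<le> t0" "t0 \<le> T"
  shows "sol (\<lambda>s. \<phi> (s + t0)) (T - t0) Q"
  unfolding sol_def
proof (intro ballI conjI)
  fix \<zeta> assume z: "\<zeta> \<in> {0..T - t0}"
  then have z': "\<zeta> + t0 \<in> {0..T}" "t0 \<in> {0..T}" using assms by auto
  show "\<forall>i<length xs. \<phi> (\<zeta> + t0) (D (xs ! i)) = tsem I (fs ! i) (\<phi> (\<zeta> + t0))" "Q (\<phi> (\<zeta> + t0))"
    using solD1[OF assms(1) z'(1)] solD2[OF assms(1) z'(1)] by auto
  show "\<forall>v. v \<notin> V ` set xs \<and> v \<notin> D ` set xs \<longrightarrow> \<phi> (\<zeta> + t0) v = \<phi> (0 + t0) v"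
    using solD3[OF assms(1) z'(1)] solD3[OF assms(1) z'(2)] by auto
  show "0 < T - t0 \<longrightarrow> (\<forall>i<length xs. ((\<lambda>t. \<phi> (t + t0) (V (xs ! i))) has_real_derivative \<phi> (\<zeta> + t0) (D (xs ! i))) (at \<zeta> within {0..T - t0}))"
  proof (intro impI allI)
    fix i assume "0 < T - t0" "i < length xs"
    then have "((\<lambda>t. \<phi> t (V (xs ! i))) has_real_derivative \<phi> (\<zeta> + t0) (D (xs ! i))) (at (\<zeta> + t0) within {0..T})"
      using solD4[OF assms(1) z'(1)] assms(2) by auto
    then have "((\<lambda>t. \<phi> t (V (xs ! i))) has_real_derivative \<phi> (\<zeta> + t0) (D (xs ! i))) (at (\<zeta> + t0) within {0 + t0..(T - t0) + t0})"
      by (rule DERIV_subset) (use assms in auto)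
    then show "((\<lambda>t. \<phi> (t + t0) (V (xs ! i))) has_real_derivative \<phi> (\<zeta> + t0) (D (xs ! i))) (at \<zeta> within {0..T - t0})"
      by (rule deriv_shift)
  qed
qed


end



context odectx
begin

lemma sol_concat:
  assumes s1: "sol \<phi>1 T1 Q" and s2: "sol \<phi>2 T2 Q" and j: "\<phi>2 0 = \<phi>1 T1"
    and T1: "0 \<le> T1" and T2: "0 \<le> T2"
  shows "sol (\<lambda>t. if t \<le> T1 then \<phi>1 t else \<phi>2 (t - T1)) (T1 + T2) Q"
  unfolding sol_def
proof (intro ballI conjI)
  define ch where "ch t = (if t \<le> T1 then \<phi>1 t else \<phi>2 (t - T1))" for t
  fix \<zeta> assume z: "\<zeta> \<in> {0..T1 + T2}"
  have c1: "\<zeta> \<le> T1 \<Longrightarrow> \<zeta> \<in> {0..T1}" and c2: "\<not> \<zeta> \<le> T1 \<Longrightarrow> \<zeta> - T1 \<in> {0..T2}" using z by auto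
  have T10: "T1 \<in> {0..T1}" "0 \<in> {0..T2}" using T1 T2 by auto
  show "\<forall>i<length xs. ch \<zeta> (D (xs ! i)) = tsem I (fs ! i) (ch \<zeta>)" "Q (ch \<zeta>)"
  proof -
    have "(\<forall>i<length xs. ch \<zeta> (D (xs ! i)) = tsem I (fs ! i) (ch \<zeta>)) \<and> Q (ch \<zeta>)"
    proof (cases "\<zeta> \<le> T1")
      case True
      then have "ch \<zeta> = \<phi>1 \<zeta>" by (simp add: ch_def)
      then show ?thesis using solD1[OF s1 c1[OF True]] solD2[OF s1 c1[OF True]] by simp
    next
      case False
      then have "ch \<zeta> = \<phi>2 (\<zeta> - T1)" by (simp add: ch_def)
      then show ?thesis using solD1[OF s2 c2[OF False]] solD2[OF s2 c2[OF False]] by simp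
    qed
    then show "\<forall>i<length xs. ch \<zeta> (D (xs ! i)) = tsem I (fs ! i) (ch \<zeta>)" "Q (ch \<zeta>)" by auto
  qed
  show "\<forall>v. v \<notin> V ` set xs \<and> v \<notin> D ` set xs \<longrightarrow> ch \<zeta> v = ch 0 v"
  proof (intro allI impI)
    fix v assume v: "v \<notin> V ` set xs \<and> v \<notin> D ` set xs"
    have "\<phi>2 (\<zeta> - T1) v = \<phi>2 0 v" if "\<not> \<zeta> \<le> T1" using solD3[OF s2 c2[OF that]] v by blast
    moreover have "\<phi>1 T1 v = \<phi>1 0 v" using solD3[OF s1 T10(1)] v by blast
    moreover have "\<phi>1 \<zeta> v = \<phi>1 0 v" if "\<zeta> \<le> T1" using solD3[OF s1 c1[OF that]] v by blast
    ultimately show "ch \<zeta> v = ch 0 v"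
    proof (cases "\<zeta> \<le> T1")
      case True
      then show ?thesis using \<open>\<zeta> \<le> T1 \<Longrightarrow> \<phi>1 \<zeta> v = \<phi>1 0 v\<close> T1 by (simp add: ch_def)
    next
      case False
      then show ?thesis using \<open>\<not> \<zeta> \<le> T1 \<Longrightarrow> \<phi>2 (\<zeta> - T1) v = \<phi>2 0 v\<close> \<open>\<phi>1 T1 v = \<phi>1 0 v\<close> j T1
        by (simp add: ch_def)
    qed
  qed
  show "0 < T1 + T2 \<longrightarrow> (\<forall>i<length xs. ((\<lambda>t. ch t (V (xs ! i))) has_real_derivative ch \<zeta> (D (xs ! i))) (at \<zeta> within {0..T1 + T2}))"
  proof (intro impI allI)
    fix i assume i: "i < length xs"
    have un: "{0..T1 + T2} = {0..T1} \<union> {T1..T1+T2}" unfolding set_eq_iff using T1 T2 by auto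
    have L: "((\<lambda>t. ch t (V (xs ! i))) has_real_derivative ch \<zeta> (D (xs ! i))) (at \<zeta> within {0..T1})"
    proof (cases "\<zeta> \<le> T1")
      case True
      show ?thesis
      proof (cases "T1 > 0")
        case pos: True
        have "((\<lambda>t. \<phi>1 t (V (xs ! i))) has_real_derivative \<phi>1 \<zeta> (D (xs ! i))) (at \<zeta> within {0..T1})"
          using solD4[OF s1 c1[OF True] pos i] .
        moreover have "ch \<zeta> = \<phi>1 \<zeta>" using True by (simp add: ch_def)
        ultimately have "((\<lambda>t. \<phi>1 t (V (xs ! i))) has_real_derivative ch \<zeta> (D (xs ! i))) (at \<zeta> within {0..T1})"
          by simp
        show ?thesis
        proof (rule has_field_derivative_transform_within[OF \<open>((\<lambda>t. \<phi>1 t (V (xs ! i))) has_real_derivative ch \<zeta> (D (xs ! i))) (at \<zeta> within {0..T1})\<close>, where d=1])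
          show "(0::real) < 1" by simp
          show "\<zeta> \<in> {0..T1}" using c1 True by simp
          fix x' assume "x' \<in> {0..T1}" "dist x' \<zeta> < 1"
          then show "\<phi>1 x' (V (xs ! i)) = ch x' (V (xs ! i))" by (simp add: ch_def)
        qed
      next
        case False
        then have e: "{0..T1} = {0}" using T1 by auto
        show ?thesis unfolding e by (rule deriv_triv) (simp add: islimpt_insert)
      qed
    next
      case False
      have "\<not> \<zeta> islimpt {0..T1}"
        using False not_limpt_left by simp
      then show ?thesis by (rule deriv_triv)
    qed
    have R: "((\<lambda>t. ch t (V (xs ! i))) has_real_derivative ch \<zeta> (D (xs ! i))) (at \<zeta> within {T1..T1+T2})"
    proof (cases "\<zeta> < T1")
      case True
      then show ?thesis by (intro deriv_triv not_limpt_right)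
    next
      case False
      then have zT: "\<zeta> - T1 \<in> {0..T2}" using z by auto
      show ?thesis
      proof (cases "T2 > 0")
        case pos: True
        have "((\<lambda>t. \<phi>2 t (V (xs ! i))) has_real_derivative \<phi>2 (\<zeta> - T1) (D (xs ! i))) (at (\<zeta> - T1) within {0..T2})"
          using solD4[OF s2 zT pos i] .
        then have "((\<lambda>t. \<phi>2 t (V (xs ! i))) has_real_derivative \<phi>2 (\<zeta> - T1) (D (xs ! i))) (at (\<zeta> + (- T1)) within {T1 + (-T1)..(T1+T2) + (-T1)})"
          by simp
        then have "((\<lambda>t. \<phi>2 (t + - T1) (V (xs ! i))) has_real_derivative \<phi>2 (\<zeta> - T1) (D (xs ! i))) (at \<zeta> within {T1..T1+T2})"
          by (rule deriv_shift)
        moreover have "\<phi>2 (\<zeta> - T1) (D (xs ! i)) = ch \<zeta> (D (xs ! i))"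
        proof (cases "\<zeta> \<le> T1")
          case True
          then have "\<zeta> = T1" using False by simp
          then show ?thesis using j by (simp add: ch_def)
        next
          case False
          then show ?thesis by (simp add: ch_def)
        qed
        ultimately have dd: "((\<lambda>t. \<phi>2 (t + - T1) (V (xs ! i))) has_real_derivative ch \<zeta> (D (xs ! i))) (at \<zeta> within {T1..T1+T2})"
          by simp
        show ?thesis
        proof (rule has_field_derivative_transform_within[OF dd, where d=1])
          show "(0::real) < 1" by simp
          show "\<zeta> \<in> {T1..T1 + T2}" using z False by simp
          fix x' assume x': "x' \<in> {T1..T1 + T2}" "dist x' \<zeta> < 1"
          show "\<phi>2 (x' + - T1) (V (xs ! i)) = ch x' (V (xs ! i))"
          proof (cases "x' \<le> T1")
            case True
            then have "x' = T1" using x' by simp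
            then show ?thesis using j by (simp add: ch_def)
          next
            case False
            then show ?thesis by (simp add: ch_def)
          qed
        qed
      next
        case False
        then have e: "{T1..T1+T2} = {T1}" using T2 by auto
        show ?thesis unfolding e by (rule deriv_triv) (simp add: islimpt_insert)
      qed
    qed
    show "((\<lambda>t. ch t (V (xs ! i))) has_real_derivative ch \<zeta> (D (xs ! i))) (at \<zeta> within {0..T1 + T2})"
      unfolding un by (rule DERIV_Un[OF L R])
  qed
qed


end



context odectx
begin

lemma solI:
  assumes "\<And>\<zeta> i. \<zeta> \<in> {0..T} \<Longrightarrow> i < length xs \<Longrightarrow> \<phi> \<zeta> (D (xs ! i)) = tsem I (fs ! i) (\<phi> \<zeta>)"
    and "\<And>\<zeta>. \<zeta> \<in> {0..T} \<Longrightarrow> Q (\<phi> \<zeta>)"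
    and "\<And>\<zeta> v. \<zeta> \<in> {0..T} \<Longrightarrow> v \<notin> V ` set xs \<Longrightarrow> v \<notin> D ` set xs \<Longrightarrow> \<phi> \<zeta> v = \<phi> 0 v"
    and "\<And>\<zeta> i. \<zeta> \<in> {0..T} \<Longrightarrow> T > 0 \<Longrightarrow> i < length xs \<Longrightarrow>
          ((\<lambda>t. \<phi> t (V (xs ! i))) has_real_derivative \<phi> \<zeta> (D (xs ! i))) (at \<zeta> within {0..T})"
  shows "sol \<phi> T Q"
  unfolding sol_def using assms by blast

lemma sol_frame:
  assumes s: "sol \<phi> T Q"
    and Y: "\<forall>y\<in>Y. y \<notin> V ` set xs \<and> y \<notin> D ` set xs \<and> (\<forall>t\<in>set fs. y \<notin> tvars t)"
    and Q: "\<forall>\<zeta>\<in>{0..T}. Q (\<phi> \<zeta>) \<longrightarrow> Q' (\<lambda>v. if v \<in> Y then c v else \<phi> \<zeta> v)"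
  shows "sol (\<lambda>\<zeta> v. if v \<in> Y then c v else \<phi> \<zeta> v) T Q'"
proof -
  define \<psi> where "\<psi> \<zeta> v = (if v \<in> Y then c v else \<phi> \<zeta> v)" for \<zeta> v
  have nYV: "V (xs ! i) \<notin> Y" and nYD: "D (xs ! i) \<notin> Y" if i: "i < length xs" for i
  proof -
    have "xs ! i \<in> set xs" using i by (rule nth_mem)
    then have "V (xs ! i) \<in> V ` set xs" "D (xs ! i) \<in> D ` set xs" by blast+
    then show "V (xs ! i) \<notin> Y" "D (xs ! i) \<notin> Y" using Y by blast+
  qed
  have "sol \<psi> T Q'"
  proof (rule solI)
    fix \<zeta> i assume z: "\<zeta> \<in> {0..T}" and i: "i < length xs"
    have "fs ! i \<in> set fs" using i fs_len by (simp add: nth_mem)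
    then have "\<forall>v\<in>tvars (fs ! i). \<psi> \<zeta> v = \<phi> \<zeta> v" using Y unfolding \<psi>_def by auto
    then have "tsem I (fs ! i) (\<psi> \<zeta>) = tsem I (fs ! i) (\<phi> \<zeta>)" by (rule tsem_agree)
    then show "\<psi> \<zeta> (D (xs ! i)) = tsem I (fs ! i) (\<psi> \<zeta>)"
      using nYD[OF i] solD1[OF s z i] unfolding \<psi>_def by simp
  next
    fix \<zeta> assume z: "\<zeta> \<in> {0..T}"
    show "Q' (\<psi> \<zeta>)" using solD2[OF s z] z Q unfolding \<psi>_def by blast
  next
    fix \<zeta> v assume z: "\<zeta> \<in> {0..T}" and "v \<notin> V ` set xs" "v \<notin> D ` set xs"
    then show "\<psi> \<zeta> v = \<psi> 0 v" using solD3[OF s z] unfolding \<psi>_def by simp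
  next
    fix \<zeta> i assume z: "\<zeta> \<in> {0..T}" and T: "T > 0" and i: "i < length xs"
    have "(\<lambda>t. \<psi> t (V (xs ! i))) = (\<lambda>t. \<phi> t (V (xs ! i)))" "\<psi> \<zeta> (D (xs ! i)) = \<phi> \<zeta> (D (xs ! i))"
      using nYV[OF i] nYD[OF i] unfolding \<psi>_def by auto
    then show "((\<lambda>t. \<psi> t (V (xs ! i))) has_real_derivative \<psi> \<zeta> (D (xs ! i))) (at \<zeta> within {0..T})"
      using solD4[OF s z T i] by simp
  qed
  then show ?thesis unfolding \<psi>_def .
qed

end



lemma exp_gronwall:
  fixes w w' :: "real \<Rightarrow> real"
  assumes e: "e > 0"
    and der: "\<And>s. s \<in> {0..e} \<Longrightarrow> (w has_real_derivative w' s) (at s within {0..e})"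
    and bnd: "\<And>s. s \<in> {0..e} \<Longrightarrow> w' s \<le> C * w s"
    and nn: "\<And>s. s \<in> {0..e} \<Longrightarrow> w s \<ge> 0"
    and w0: "w 0 = 0"
  shows "\<forall>s\<in>{0..e}. w s = 0"
proof
  fix s assume s: "s \<in> {0..e}"
  define g where "g t = exp (- C * t) * w t" for t
  define g' where "g' t = - C * exp (- C * t) * w t + exp (- C * t) * w' t" for t
  have gd: "(g has_real_derivative g' t) (at t within {0..e})" if t: "t \<in> {0..e}" for t
  proof -
    have "((\<lambda>t. exp (- C * t)) has_real_derivative exp (- C * t) * (- C * 1)) (at t within {0..e})"
      by (intro DERIV_chain2[OF DERIV_exp] DERIV_cmult DERIV_ident)
    from DERIV_mult[OF this der[OF t]]
    have "((\<lambda>t. exp (- C * t) * w t) has_real_derivative exp (- C * t) * (- C * 1) * w t + w' t * exp (- C * t)) (at t within {0..e})" .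
    then show ?thesis unfolding g_def g'_def by (simp add: algebra_simps)
  qed
  have g'le: "g' t \<le> 0" if t: "t \<in> {0..e}" for t
  proof -
    have "g' t = exp (- C * t) * (w' t - C * w t)" unfolding g'_def by (simp add: algebra_simps)
    also have "\<dots> \<le> 0" using bnd[OF t] by (intro mult_nonneg_nonpos) auto
    finally show ?thesis .
  qed
  show "w s = 0"
  proof (cases "s = 0")
    case True then show ?thesis using w0 by simp
  next
    case False
    then have s0: "0 < s" using s by simp
    have "\<exists>x\<in>{0<..<s}. g s - g 0 = (\<lambda>h. g' x * h) (s - 0)"
    proof (rule mvt_simple[OF s0])
      fix x assume "0 \<le> x" "x \<le> s"
      then have x: "x \<in> {0..e}" using s by simp
      have "(g has_real_derivative g' x) (at x within {0..s})"
        by (rule DERIV_subset[OF gd[OF x]]) (use s in auto)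
      then show "(g has_derivative (\<lambda>h. g' x * h)) (at x within {0..s})"
        by (simp add: has_field_derivative_def)
    qed
    then obtain x where x: "x \<in> {0<..<s}" "g s - g 0 = g' x * s" by auto
    have "x \<in> {0..e}" using x s by simp
    then have "g' x * s \<le> 0" using g'le s0 by (simp add: mult_nonpos_nonneg)
    moreover have "g 0 = 0" unfolding g_def using w0 by simp
    ultimately have "g s \<le> 0" using x by simp
    moreover have "g s \<ge> 0" unfolding g_def using nn[OF s] by simp
    ultimately have "exp (- C * s) * w s = 0" unfolding g_def by simp
    then show ?thesis by simp
  qed
qed

context odectx
begin

lemma G_lip:
  "\<exists>d>0. \<exists>L\<ge>0. \<forall>i<length xs. \<forall>z w. dn (length xs) z a < d \<longrightarrow> dn (length xs) w a < d \<longrightarrow>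
     \<bar>tsem I (fs!i) (st xs \<nu> z) - tsem I (fs!i) (st xs \<nu> w)\<bar> \<le> L * dn (length xs) z w"
proof -
  define n where "n = length xs"
  have "\<forall>i\<in>{..<n}. \<exists>d. d > 0 \<and> (\<exists>L\<ge>0. \<forall>z w. dn n z a < d \<longrightarrow> dn n w a < d \<longrightarrow>
     \<bar>tsem I (fs!i) (st xs \<nu> z) - tsem I (fs!i) (st xs \<nu> w)\<bar> \<le> L * dn n z w)"
    using trm_lip[OF smoothI fs_wf] unfolding n_def by blast
  then obtain dd where dd: "\<forall>i\<in>{..<n}. dd i > 0 \<and> (\<exists>L\<ge>0. \<forall>z w. dn n z a < dd i \<longrightarrow> dn n w a < dd i \<longrightarrow>
     \<bar>tsem I (fs!i) (st xs \<nu> z) - tsem I (fs!i) (st xs \<nu> w)\<bar> \<le> L * dn n z w)"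
    by (rule bchoice[THEN exE]) blast
  then have "\<forall>i\<in>{..<n}. \<exists>L. L \<ge> 0 \<and> (\<forall>z w. dn n z a < dd i \<longrightarrow> dn n w a < dd i \<longrightarrow>
     \<bar>tsem I (fs!i) (st xs \<nu> z) - tsem I (fs!i) (st xs \<nu> w)\<bar> \<le> L * dn n z w)"
    by blast
  then obtain LL where LL: "\<forall>i\<in>{..<n}. LL i \<ge> 0 \<and> (\<forall>z w. dn n z a < dd i \<longrightarrow> dn n w a < dd i \<longrightarrow>
     \<bar>tsem I (fs!i) (st xs \<nu> z) - tsem I (fs!i) (st xs \<nu> w)\<bar> \<le> LL i * dn n z w)"
    by (rule bchoice[THEN exE]) blast
  define d0 where "d0 = Min (insert 1 (dd ` {..<n}))"
  have d00: "d0 > 0" unfolding d0_def using dd by (subst Min_gr_iff) auto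
  have d0le: "i < n \<Longrightarrow> d0 \<le> dd i" for i unfolding d0_def by (rule Min_le) auto
  define Ls where "Ls = (\<Sum>i<n. LL i)"
  have Ls0: "Ls \<ge> 0" unfolding Ls_def using LL by (intro sum_nonneg) auto
  have LLs: "i < n \<Longrightarrow> LL i \<le> Ls" for i unfolding Ls_def using LL by (intro member_le_sum) auto
  show ?thesis
  proof (intro exI conjI allI impI)
    show "d0 > 0" "Ls \<ge> 0" using d00 Ls0 by auto
    fix i z w assume i: "i < length xs" and z: "dn (length xs) z a < d0" and w: "dn (length xs) w a < d0"
    have i': "i < n" using i n_def by simp
    have "\<bar>tsem I (fs!i) (st xs \<nu> z) - tsem I (fs!i) (st xs \<nu> w)\<bar> \<le> LL i * dn n z w"
      using LL i' z w d0le[OF i'] n_def by force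
    also have "\<dots> \<le> Ls * dn n z w" using LLs[OF i'] dn_nonneg by (intro mult_right_mono) auto
    finally show "\<bar>tsem I (fs!i) (st xs \<nu> z) - tsem I (fs!i) (st xs \<nu> w)\<bar> \<le> Ls * dn (length xs) z w"
      using n_def by simp
  qed
qed

lemma sol_escape:
  assumes s: "sol \<phi> T Q" and t0: "0 \<le> t0" "t0 < T" and i: "i < length xs"
    and nz: "tsem I (fs!i) (\<phi> t0) \<noteq> 0"
  shows "\<exists>\<epsilon>>0. \<forall>s. 0 < s \<longrightarrow> s < \<epsilon> \<longrightarrow> t0 + s \<le> T \<longrightarrow> \<phi> (t0 + s) (V (xs!i)) \<noteq> \<phi> t0 (V (xs!i))"
proof -
  have z: "t0 \<in> {0..T}" and T: "T > 0" using t0 by auto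
  have "((\<lambda>t. \<phi> t (V (xs ! i))) has_real_derivative \<phi> t0 (D (xs ! i))) (at t0 within {0..T})"
    by (rule solD4[OF s z T i])
  then have "((\<lambda>y. (\<phi> y (V (xs ! i)) - \<phi> t0 (V (xs ! i))) / (y - t0)) \<longlongrightarrow> \<phi> t0 (D (xs ! i))) (at t0 within {0..T})"
    unfolding has_field_derivative_iff .
  moreover have "\<phi> t0 (D (xs ! i)) \<noteq> 0" using solD1[OF s z i] nz by simp
  ultimately have "eventually (\<lambda>y. (\<phi> y (V (xs ! i)) - \<phi> t0 (V (xs ! i))) / (y - t0) \<noteq> 0) (at t0 within {0..T})"
    by (rule tendsto_imp_eventually_ne)
  then obtain d where d: "d > 0" and hd: "\<forall>y\<in>{0..T}. y \<noteq> t0 \<and> dist y t0 < d \<longrightarrow>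
      (\<phi> y (V (xs ! i)) - \<phi> t0 (V (xs ! i))) / (y - t0) \<noteq> 0"
    unfolding eventually_at by blast
  show ?thesis
  proof (intro exI conjI allI impI)
    show "d > 0" by (rule d)
    fix s assume "0 < s" "s < d" "t0 + s \<le> T"
    then have "t0 + s \<in> {0..T}" "t0 + s \<noteq> t0" "dist (t0 + s) t0 < d" using t0 by (auto simp: dist_real_def)
    then have "(\<phi> (t0 + s) (V (xs ! i)) - \<phi> t0 (V (xs ! i))) / (t0 + s - t0) \<noteq> 0" using hd by blast
    then show "\<phi> (t0 + s) (V (xs!i)) \<noteq> \<phi> t0 (V (xs!i))" by auto
  qed
qed

end



context odectx
begin

lemma near_start:
  assumes s1: "sol \<phi> T1 Q1" and T1: "0 < T1" and d: "d > 0"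
  shows "\<exists>e1>0. \<forall>t\<in>{0..T1}. t \<noteq> 0 \<and> dist t 0 < e1 \<longrightarrow>
            (\<forall>i\<in>{..<length xs}. \<bar>\<phi> t (V (xs!i)) - \<phi> 0 (V (xs!i))\<bar> < d)"
proof -
  have "eventually (\<lambda>t. \<forall>i\<in>{..<length xs}. \<bar>\<phi> t (V (xs!i)) - \<phi> 0 (V (xs!i))\<bar> < d) (at 0 within {0..T1})"
  proof (rule eventually_ball_finite)
    show "finite {..<length xs}" by simp
    show "\<forall>i\<in>{..<length xs}. eventually (\<lambda>t. \<bar>\<phi> t (V (xs!i)) - \<phi> 0 (V (xs!i))\<bar> < d) (at 0 within {0..T1})"
    proof
      fix i assume "i \<in> {..<length xs}"
      then have i: "i < length xs" by simp
      have z: "0 \<in> {0..T1}" using T1 by simp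
      from solD4[OF s1 z T1 i] have "continuous (at 0 within {0..T1}) (\<lambda>t. \<phi> t (V (xs!i)))"
        by (rule DERIV_continuous)
      then have "((\<lambda>t. \<phi> t (V (xs!i))) \<longlongrightarrow> \<phi> 0 (V (xs!i))) (at 0 within {0..T1})"
        by (simp add: continuous_within)
      then have "eventually (\<lambda>t. dist (\<phi> t (V (xs!i))) (\<phi> 0 (V (xs!i))) < d) (at 0 within {0..T1})"
        using d by (rule tendstoD)
      then show "eventually (\<lambda>t. \<bar>\<phi> t (V (xs!i)) - \<phi> 0 (V (xs!i))\<bar> < d) (at 0 within {0..T1})"
        unfolding dist_real_def .
    qed
  qed
  then show ?thesis unfolding eventually_at by blast
qed

lemma sol_unique:
  assumes s1: "sol \<phi> T1 Q1" and s2: "sol \<psi> T2 Q2" and T1: "0 < T1" and T2: "0 < T2"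
    and x0: "\<forall>i<length xs. \<phi> 0 (V (xs!i)) = \<psi> 0 (V (xs!i))"
    and o0: "\<forall>i<length xs. \<forall>x. V x \<in> tvars (fs!i) \<longrightarrow> x \<notin> set xs \<longrightarrow> \<phi> 0 (V x) = \<psi> 0 (V x)"
  shows "\<exists>e>0. e \<le> T1 \<and> e \<le> T2 \<and> (\<forall>s\<in>{0..e}. \<forall>i<length xs. \<phi> s (V (xs!i)) = \<psi> s (V (xs!i)))"
proof -
  define n where "n = length xs"
  define \<nu> where "\<nu> = \<phi> 0"
  define a where "a i = \<phi> 0 (V (xs!i))" for i
  define xp where "xp s i = \<phi> s (V (xs!i))" for s i
  define xq where "xq s i = \<psi> s (V (xs!i))" for s i
  define G where "G i z = tsem I (fs!i) (st xs \<nu> z)" for i z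
  have stV: "st xs \<nu> z (V x) = (if x \<in> set xs then z (idx xs x) else \<nu> (V x))" for z x
    unfolding st_def by simp
  have eqp: "tsem I (fs!i) (\<phi> s) = G i (xp s)" if s: "s \<in> {0..T1}" and i: "i < n" for s i
    unfolding G_def
  proof (rule tsem_agreeV[OF fs_dfree])
    show "i < length xs" using i n_def by simp
    fix x assume "V x \<in> tvars (fs ! i)"
    show "\<phi> s (V x) = st xs \<nu> (xp s) (V x)"
    proof (cases "x \<in> set xs")
      case True
      then show ?thesis unfolding stV xp_def using nth_idx[OF True] by simp
    next
      case False
      then have "V x \<notin> V ` set xs" "V x \<notin> D ` set xs" by auto
      then show ?thesis using stV[of "xp s" x] False solD3[OF s1 s] by (simp add: \<nu>_def)
    qed
  qed
  have eqq: "tsem I (fs!i) (\<psi> s) = G i (xq s)" if s: "s \<in> {0..T2}" and i: "i < n" for s i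
    unfolding G_def
  proof (rule tsem_agreeV[OF fs_dfree])
    show "i < length xs" using i n_def by simp
    fix x assume xv: "V x \<in> tvars (fs ! i)"
    show "\<psi> s (V x) = st xs \<nu> (xq s) (V x)"
    proof (cases "x \<in> set xs")
      case True
      then show ?thesis unfolding stV xq_def using nth_idx[OF True] by simp
    next
      case False
      then have "V x \<notin> V ` set xs" "V x \<notin> D ` set xs" by auto
      then have "\<psi> s (V x) = \<psi> 0 (V x)" using solD3[OF s2 s] by simp
      also have "\<dots> = \<phi> 0 (V x)" using o0 i xv False n_def by simp
      finally show ?thesis using stV[of "xq s" x] False by (simp add: \<nu>_def)
    qed
  qed
  obtain d L where d: "d > 0" "L \<ge> 0" and lip: "\<forall>i<length xs. \<forall>z w. dn (length xs) z a < d \<longrightarrow> dn (length xs) w a < d \<longrightarrow>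
     \<bar>G i z - G i w\<bar> \<le> L * dn (length xs) z w"
    using G_lip[of a \<nu>] unfolding G_def by blast
  have d2: "d/2 > 0" using d by simp
  obtain e1 where e1: "e1 > 0" "\<forall>t\<in>{0..T1}. t \<noteq> 0 \<and> dist t 0 < e1 \<longrightarrow>
            (\<forall>i\<in>{..<length xs}. \<bar>\<phi> t (V (xs!i)) - \<phi> 0 (V (xs!i))\<bar> < d/2)"
    using near_start[OF s1 T1 d2] by blast
  obtain e2 where e2: "e2 > 0" "\<forall>t\<in>{0..T2}. t \<noteq> 0 \<and> dist t 0 < e2 \<longrightarrow>
            (\<forall>i\<in>{..<length xs}. \<bar>\<psi> t (V (xs!i)) - \<psi> 0 (V (xs!i))\<bar> < d/2)"
    using near_start[OF s2 T2 d2] by blast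
  define e where "e = min (e1/2) (min (e2/2) (min T1 T2))"
  have e0: "e > 0" unfolding e_def using e1 e2 T1 T2 by simp
  have eT: "e \<le> T1" "e \<le> T2" "e < e1" "e < e2" unfolding e_def using e1 e2 by auto
  have nearp: "dn n (xp s) a < d" if s: "s \<in> {0..e}" for s
  proof -
    have "dn n (xp s) a \<le> d/2"
    proof (rule dn_le)
      show "0 \<le> d/2" using d by simp
      fix i assume i: "i < n"
      show "\<bar>xp s i - a i\<bar> \<le> d/2"
      proof (cases "s = 0")
        case True then show ?thesis using d unfolding xp_def a_def by simp
      next
        case False
        have "s \<in> {0..T1}" "dist s 0 < e1" using s eT by (auto simp: dist_real_def)
        then have "\<bar>\<phi> s (V (xs!i)) - \<phi> 0 (V (xs!i))\<bar> < d/2" using e1(2) False i n_def by simp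
        then show ?thesis unfolding xp_def a_def by simp
      qed
    qed
    then show ?thesis using d by simp
  qed
  have nearq: "dn n (xq s) a < d" if s: "s \<in> {0..e}" for s
  proof -
    have "dn n (xq s) a \<le> d/2"
    proof (rule dn_le)
      show "0 \<le> d/2" using d by simp
      fix i assume i: "i < n"
      have a0: "a i = \<psi> 0 (V (xs!i))" unfolding a_def using x0 i n_def by simp
      show "\<bar>xq s i - a i\<bar> \<le> d/2"
      proof (cases "s = 0")
        case True then show ?thesis using d a0 unfolding xq_def by simp
      next
        case False
        have "s \<in> {0..T2}" "dist s 0 < e2" using s eT by (auto simp: dist_real_def)
        then have "\<bar>\<psi> s (V (xs!i)) - \<psi> 0 (V (xs!i))\<bar> < d/2" using e2(2) False i n_def by simp
        then show ?thesis unfolding xq_def a0 by simp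
      qed
    qed
    then show ?thesis using d by simp
  qed
  define p where "p i s = xp s i - xq s i" for i s
  define w where "w s = (\<Sum>i<n. p i s * p i s)" for s
  define dp where "dp i s = \<phi> s (D (xs!i)) - \<psi> s (D (xs!i))" for i s
  define w' where "w' s = (\<Sum>i<n. dp i s * p i s + dp i s * p i s)" for s
  have sT1: "s \<in> {0..T1}" and sT2: "s \<in> {0..T2}" if "s \<in> {0..e}" for s using that eT by auto
  have pd: "((\<lambda>t. p i t) has_real_derivative dp i s) (at s within {0..e})" if s: "s \<in> {0..e}" and i: "i < n" for i s
  proof -
    have i': "i < length xs" using i n_def by simp
    have "((\<lambda>t. \<phi> t (V (xs ! i))) has_real_derivative \<phi> s (D (xs ! i))) (at s within {0..e})"
      by (rule DERIV_subset[OF solD4[OF s1 sT1[OF s] T1 i']]) (use eT in auto)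
    moreover have "((\<lambda>t. \<psi> t (V (xs ! i))) has_real_derivative \<psi> s (D (xs ! i))) (at s within {0..e})"
      by (rule DERIV_subset[OF solD4[OF s2 sT2[OF s] T2 i']]) (use eT in auto)
    ultimately show ?thesis unfolding p_def dp_def xp_def xq_def by (rule DERIV_diff)
  qed
  have wd: "(w has_real_derivative w' s) (at s within {0..e})" if s: "s \<in> {0..e}" for s
    unfolding w_def w'_def
    by (rule DERIV_sum, rule DERIV_mult) (use pd[OF s] in auto)
  have wnn: "w s \<ge> 0" for s unfolding w_def by (intro sum_nonneg) auto
  have dpG: "dp i s = G i (xp s) - G i (xq s)" if s: "s \<in> {0..e}" and i: "i < n" for s i
  proof -
    have i': "i < length xs" using i n_def by simp
    show ?thesis unfolding dp_def
      using solD1[OF s1 sT1[OF s] i'] solD1[OF s2 sT2[OF s] i'] eqp[OF sT1[OF s] i] eqq[OF sT2[OF s] i] by simp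
  qed
  have bound: "w' s \<le> (2 * real n * L) * w s" if s: "s \<in> {0..e}" for s
  proof -
    have pw: "\<bar>p i s\<bar> \<le> sqrt (w s)" if i: "i < n" for i
    proof (rule real_le_rsqrt)
      have "p i s * p i s \<le> w s" unfolding w_def using i by (intro member_le_sum) auto
      then show "\<bar>p i s\<bar>\<^sup>2 \<le> w s" by (simp add: power2_eq_square)
    qed
    have dnq: "dn n (xp s) (xq s) \<le> sqrt (w s)"
      by (rule dn_le) (use pw wnn[of s] in \<open>auto simp: p_def\<close>)
    have tmb: "dp i s * p i s + dp i s * p i s \<le> 2 * L * w s" if i: "i < n" for i
    proof -
      have "\<bar>dp i s\<bar> \<le> L * dn n (xp s) (xq s)"
        using dpG[OF s i] lip i nearp[OF s] nearq[OF s] n_def by simp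
      also have "\<dots> \<le> L * sqrt (w s)" using dnq d by (intro mult_left_mono) auto
      finally have dpb: "\<bar>dp i s\<bar> \<le> L * sqrt (w s)" .
      have "dp i s * p i s + dp i s * p i s \<le> 2 * (\<bar>dp i s\<bar> * \<bar>p i s\<bar>)"
        by (simp add: abs_mult[symmetric])
      also have "\<dots> \<le> 2 * ((L * sqrt (w s)) * sqrt (w s))"
        using dpb pw[OF i] by (intro mult_left_mono mult_mono) auto
      also have "\<dots> = 2 * L * w s" using wnn[of s] by (simp add: mult.assoc)
      finally show ?thesis .
    qed
    have "w' s \<le> (\<Sum>i<n. 2 * L * w s)" unfolding w'_def using tmb by (intro sum_mono) auto
    also have "\<dots> = (2 * real n * L) * w s" by simp
    finally show ?thesis .
  qed
  have w0: "w 0 = 0" unfolding w_def p_def xp_def xq_def using x0 n_def by simp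
  have wz: "\<forall>s\<in>{0..e}. w s = 0"
    by (rule exp_gronwall[OF e0 wd bound wnn w0])
  show ?thesis
  proof (intro exI conjI ballI allI impI)
    show "e > 0" "e \<le> T1" "e \<le> T2" using e0 eT by auto
    fix s i assume s: "s \<in> {0..e}" and i: "i < length xs"
    have "(\<Sum>i<n. p i s * p i s) = 0" using wz s unfolding w_def by blast
    then have "\<forall>i\<in>{..<n}. p i s * p i s = 0" by (subst (asm) sum_nonneg_eq_0_iff) auto
    then have "p i s = 0" using i n_def by simp
    then show "\<phi> s (V (xs!i)) = \<psi> s (V (xs!i))" unfolding p_def xp_def xq_def by simp
  qed
qed

end



lemma fsem_agree: "(\<forall>v\<in>fvars P. s1 v = s2 v) \<Longrightarrow> fsem I P s1 = fsem I P s2"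
proof (induction P)
  case (Cmp c a b)
  then have "tsem I a s1 = tsem I a s2" "tsem I b s1 = tsem I b s2"
    by (auto simp: fvars_def intro!: tsem_agree)
  then show ?case by simp
qed (auto simp: fvars_def)

lemma fsem_agreeV:
  assumes "semianalytic ar P" "\<And>x. V x \<in> fvars P \<Longrightarrow> s1 (V x) = s2 (V x)"
  shows "fsem I P s1 = fsem I P s2"
proof (rule fsem_agree, intro ballI)
  fix v assume v: "v \<in> fvars P"
  show "s1 v = s2 v"
  proof (cases v)
    case (V x) then show ?thesis using assms(2) v by simp
  next
    case (D x)
    from v obtain t where "t \<in> fterms P" "v \<in> tvars t" unfolding fvars_def by blast
    then show ?thesis using assms(1) D unfolding semianalytic_def dfree_def by blast
  qed
qed

context odectx
begin

lemma sol_Q: "sol \<phi> T Q \<Longrightarrow> (\<And>\<zeta>. \<zeta> \<in> {0..T} \<Longrightarrow> Q' (\<phi> \<zeta>)) \<Longrightarrow> sol \<phi> T Q'"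
  by (rule solI) (auto intro: solD1 solD3 solD4)

lemma sol_init_eq:
  assumes s: "sol \<psi> h Q" and h: "0 \<le> h" and init: "\<forall>v. v \<notin> D ` set xs \<longrightarrow> \<psi> 0 v = \<nu> v"
    and Deq: "\<forall>i<length xs. \<nu> (D (xs ! i)) = tsem I (fs ! i) \<nu>"
  shows "\<psi> 0 = \<nu>"
proof
  fix v
  show "\<psi> 0 v = \<nu> v"
  proof (cases "v \<in> D ` set xs")
    case True
    then obtain x where x: "x \<in> set xs" "v = D x" by blast
    define i where "i = idx xs x"
    have i: "i < length xs" "xs ! i = x" unfolding i_def using x by (auto simp: idx_lt nth_idx)
    have z: "0 \<in> {0..h}" using h by simp
    have "tsem I (fs ! i) (\<psi> 0) = tsem I (fs ! i) \<nu>"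
      by (rule tsem_agreeV[OF fs_dfree[OF i(1)]]) (use init in auto)
    then show ?thesis using solD1[OF s z i(1)] Deq[rule_format, OF i(1)] i x by simp
  next
    case False
    then show ?thesis using init by simp
  qed
qed

end



context odectx
begin

lemma dir1:
  assumes evolves: "\<forall>\<nu>. \<exists>i<length xs. tsem I (fs ! i) \<nu> \<noteq> 0"
    and P_sa: "semianalytic ar P"
    and ys_len: "length ys = length xs"
    and ys_fresh: "\<forall>y\<in>set ys. y \<notin> set xs \<and> V y \<notin> fvars P \<and> (\<forall>t\<in>set fs. V y \<notin> tvars t)"
    and box1: "box (ode_rel I xs fs (\<lambda>_. True)) (fsem I P) \<omega>"
    and om: "\<forall>v. v \<notin> V ` set ys \<longrightarrow> \<omega>' v = \<omega> v"
  shows "box (ode_rel I xs fs (\<lambda>\<nu>. fsem I P \<nu> \<or> veq xs ys \<nu>))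
                  (\<lambda>\<nu>. veq xs ys \<nu> \<longrightarrow>
                        fsem I P \<nu> \<and>
                        dia (ode_rel I xs fs (\<lambda>\<mu>. fsem I P \<mu> \<or> veq xs ys \<mu>))
                            (\<lambda>\<mu>. \<not> veq xs ys \<mu>) \<nu>)
                  \<omega>'"
  unfolding box_def
proof (intro allI impI)
  define Y where "Y = V ` set ys"
  have Yf: "\<forall>y\<in>Y. y \<notin> V ` set xs \<and> y \<notin> D ` set xs \<and> (\<forall>t\<in>set fs. y \<notin> tvars t)"
    using ys_fresh unfolding Y_def by auto
  have Pind: "fsem I P s1 = fsem I P s2" if ag: "\<forall>v. v \<notin> Y \<longrightarrow> s1 v = s2 v" for s1 s2
  proof (rule fsem_agreeV[OF P_sa])
    fix x assume "V x \<in> fvars P"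
    then have "V x \<notin> Y" using ys_fresh unfolding Y_def by auto
    then show "s1 (V x) = s2 (V x)" using ag by simp
  qed
  have reach: "fsem I P \<sigma>" if "ode_rel I xs fs (\<lambda>_. True) \<omega> \<sigma>" for \<sigma>
    using box1 that unfolding box_def by blast
  fix \<nu> assume r: "ode_rel I xs fs (\<lambda>\<nu>. fsem I P \<nu> \<or> veq xs ys \<nu>) \<omega>' \<nu>" and vq: "veq xs ys \<nu>"
  obtain T \<phi> where T: "T \<ge> 0" and init: "\<forall>v. v \<notin> D ` set xs \<longrightarrow> \<phi> 0 v = \<omega>' v"
    and \<phi>T: "\<phi> T = \<nu>" and s: "sol \<phi> T (\<lambda>\<nu>. fsem I P \<nu> \<or> veq xs ys \<nu>)"
    using r unfolding ode_rel_sol by blast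
  define \<phi>' where "\<phi>' \<zeta> v = (if v \<in> Y then \<omega> v else \<phi> \<zeta> v)" for \<zeta> v
  have s': "sol \<phi>' T (\<lambda>_. True)" unfolding \<phi>'_def by (rule sol_frame[OF s Yf]) simp
  have init': "\<forall>v. v \<notin> D ` set xs \<longrightarrow> \<phi>' 0 v = \<omega> v"
    using init om unfolding \<phi>'_def Y_def by auto
  have "ode_rel I xs fs (\<lambda>_. True) \<omega> (\<phi>' T)"
    unfolding ode_rel_sol using T init' s' by blast
  then have "fsem I P (\<phi>' T)" by (rule reach)
  moreover have "fsem I P (\<phi>' T) = fsem I P \<nu>" by (rule Pind) (simp add: \<phi>'_def \<phi>T)
  ultimately have P\<nu>: "fsem I P \<nu>" by simp
  obtain h \<psi> where h0: "h > 0" and init\<psi>: "\<forall>v. v \<notin> D ` set xs \<longrightarrow> \<psi> 0 v = \<nu> v"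
    and s\<psi>: "sol \<psi> h (\<lambda>_. True)"
    using exists_sol[of \<nu>] by blast
  have Tin: "T \<in> {0..T}" using T by simp
  have Deq: "\<forall>i<length xs. \<nu> (D (xs ! i)) = tsem I (fs ! i) \<nu>"
    using solD1[OF s Tin] \<phi>T by simp
  have \<psi>0: "\<psi> 0 = \<nu>" by (rule sol_init_eq[OF s\<psi> _ init\<psi> Deq]) (use h0 in simp)
  obtain i where i: "i < length xs" and nz: "tsem I (fs ! i) (\<psi> 0) \<noteq> 0" using evolves by blast
  obtain \<epsilon> where \<epsilon>: "\<epsilon> > 0" and esc: "\<forall>s. 0 < s \<longrightarrow> s < \<epsilon> \<longrightarrow> 0 + s \<le> h \<longrightarrow> \<psi> (0 + s) (V (xs!i)) \<noteq> \<psi> 0 (V (xs!i))"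
    using sol_escape[OF s\<psi> _ h0 i nz] by auto
  define s1 where "s1 = min (\<epsilon>/2) h"
  have s1: "0 < s1" "s1 < \<epsilon>" "s1 \<le> h" unfolding s1_def using \<epsilon> h0 by auto
  have ysi: "ys ! i \<in> set ys" using i ys_len by simp
  then have ysi': "V (ys ! i) \<notin> V ` set xs" "V (ys ! i) \<notin> D ` set xs" using ys_fresh by auto
  have s1in: "s1 \<in> {0..h}" using s1 by simp
  have e1: "\<psi> s1 (V (xs!i)) \<noteq> \<psi> 0 (V (xs!i))" using esc s1 by simp
  have c1: "\<psi> s1 (V (ys!i)) = \<psi> 0 (V (ys!i))" by (rule solD3[OF s\<psi> s1in ysi'(1) ysi'(2)])
  have c2: "\<nu> (V (xs!i)) = \<nu> (V (ys!i))" using vq i unfolding veq_def by blast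
  have nv: "\<not> veq xs ys (\<psi> s1)"
  proof
    assume "veq xs ys (\<psi> s1)"
    then have "\<psi> s1 (V (xs!i)) = \<psi> s1 (V (ys!i))" unfolding veq_def using i by blast
    then have "\<psi> s1 (V (xs!i)) = \<psi> 0 (V (xs!i))" using c1 c2 \<psi>0 by simp
    then show False using e1 by contradiction
  qed
  have P\<psi>: "fsem I P (\<psi> s)" if sr: "s \<in> {0..s1}" for s
  proof -
    have sh: "0 \<le> s" "s \<le> h" using sr s1 by auto
    define \<psi>' where "\<psi>' \<zeta> v = (if v \<in> Y then \<omega> v else \<psi> \<zeta> v)" for \<zeta> v
    have s\<psi>': "sol \<psi>' s (\<lambda>_. True)"
      unfolding \<psi>'_def by (rule sol_frame[OF sol_restrict[OF s\<psi> sh] Yf]) simp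
    have join: "\<psi>' 0 = \<phi>' T" unfolding \<psi>'_def \<phi>'_def \<psi>0 \<phi>T by (rule refl)
    have sc: "sol (\<lambda>t. if t \<le> T then \<phi>' t else \<psi>' (t - T)) (T + s) (\<lambda>_. True)"
      by (rule sol_concat[OF s' s\<psi>' join T sh(1)])
    have "ode_rel I xs fs (\<lambda>_. True) \<omega> ((\<lambda>t. if t \<le> T then \<phi>' t else \<psi>' (t - T)) (T + s))"
      unfolding ode_rel_sol
    proof (intro exI conjI)
      show "T + s \<ge> 0" using T sh by simp
      show "\<forall>v. v \<notin> D ` set xs \<longrightarrow> (if 0 \<le> T then \<phi>' 0 else \<psi>' (0 - T)) v = \<omega> v"
        using init' T by simp
    qed (rule refl, rule sc)
    then have "fsem I P ((\<lambda>t. if t \<le> T then \<phi>' t else \<psi>' (t - T)) (T + s))" by (rule reach)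
    moreover have "(\<lambda>t. if t \<le> T then \<phi>' t else \<psi>' (t - T)) (T + s) = \<psi>' s"
    proof (cases "s = 0")
      case True then show ?thesis using join by simp
    next
      case False then show ?thesis using sh by simp
    qed
    moreover have "fsem I P (\<psi>' s) = fsem I P (\<psi> s)" by (rule Pind) (simp add: \<psi>'_def)
    ultimately show ?thesis by simp
  qed
  have "ode_rel I xs fs (\<lambda>\<mu>. fsem I P \<mu> \<or> veq xs ys \<mu>) \<nu> (\<psi> s1)"
    unfolding ode_rel_sol
  proof (intro exI conjI)
    show "s1 \<ge> 0" using s1 by simp
    show "\<forall>v. v \<notin> D ` set xs \<longrightarrow> \<psi> 0 v = \<nu> v" using \<psi>0 by simp
    show "sol \<psi> s1 (\<lambda>\<mu>. fsem I P \<mu> \<or> veq xs ys \<mu>)"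
      by (rule sol_Q[OF sol_restrict[OF s\<psi>]]) (use s1 P\<psi> in auto)
  qed (rule refl)
  then show "fsem I P \<nu> \<and> dia (ode_rel I xs fs (\<lambda>\<mu>. fsem I P \<mu> \<or> veq xs ys \<mu>)) (\<lambda>\<mu>. \<not> veq xs ys \<mu>) \<nu>"
    using P\<nu> nv unfolding dia_def by blast
qed

end



context odectx
begin

lemma dir2:
  assumes evolves: "\<forall>\<nu>. \<exists>i<length xs. tsem I (fs ! i) \<nu> \<noteq> 0"
    and P_sa: "semianalytic ar P"
    and ys_dist: "distinct ys"
    and ys_len: "length ys = length xs"
    and ys_fresh: "\<forall>y\<in>set ys. y \<notin> set xs \<and> V y \<notin> fvars P \<and> (\<forall>t\<in>set fs. V y \<notin> tvars t)"
    and rhs: "\<forall>\<omega>'. (\<forall>v. v \<notin> V ` set ys \<longrightarrow> \<omega>' v = \<omega> v) \<longrightarrow>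
              box (ode_rel I xs fs (\<lambda>\<nu>. fsem I P \<nu> \<or> veq xs ys \<nu>))
                  (\<lambda>\<nu>. veq xs ys \<nu> \<longrightarrow>
                        fsem I P \<nu> \<and>
                        dia (ode_rel I xs fs (\<lambda>\<mu>. fsem I P \<mu> \<or> veq xs ys \<mu>))
                            (\<lambda>\<mu>. \<not> veq xs ys \<mu>) \<nu>)
                  \<omega>'"
  shows "box (ode_rel I xs fs (\<lambda>_. True)) (fsem I P) \<omega>"
  unfolding box_def
proof (intro allI impI)
  define Y where "Y = V ` set ys"
  have Yf: "\<forall>y\<in>Y. y \<notin> V ` set xs \<and> y \<notin> D ` set xs \<and> (\<forall>t\<in>set fs. y \<notin> tvars t)"
    using ys_fresh unfolding Y_def by auto
  have PY: "V x \<notin> Y" if "V x \<in> fvars P" for x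
    using that ys_fresh unfolding Y_def by auto
  have Pind: "fsem I P s1 = fsem I P s2" if ag: "\<forall>v. v \<notin> Y \<longrightarrow> s1 v = s2 v" for s1 s2
  proof (rule fsem_agreeV[OF P_sa])
    fix x assume "V x \<in> fvars P"
    then have "V x \<notin> Y" by (rule PY)
    then show "s1 (V x) = s2 (V x)" using ag by simp
  qed
  have xsY: "V (xs ! i) \<notin> Y" if "i < length xs" for i
    using Yf that by (metis image_eqI nth_mem)
  have ysY: "V (ys ! i) \<in> Y" if "i < length xs" for i
    unfolding Y_def using that ys_len by simp
  have ysF: "V (ys ! i) \<notin> V ` set xs" "V (ys ! i) \<notin> D ` set xs" if "i < length xs" for i
    using Yf ysY[OF that] by blast+
  fix \<nu> assume r: "ode_rel I xs fs (\<lambda>_. True) \<omega> \<nu>"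
  obtain T \<phi> where T: "T \<ge> 0" and init: "\<forall>v. v \<notin> D ` set xs \<longrightarrow> \<phi> 0 v = \<omega> v"
    and \<phi>T: "\<phi> T = \<nu>" and s: "sol \<phi> T (\<lambda>_. True)"
    using r unfolding ode_rel_sol by blast
  define S where "S = {s \<in> {0..T}. \<forall>r\<in>{0..<s}. fsem I P (\<phi> r)}"
  have S0: "0 \<in> S" unfolding S_def using T by simp
  have Sne: "S \<noteq> {}" using S0 by blast
  have Sb: "bdd_above S" unfolding S_def by (rule bdd_aboveI[of _ T]) auto
  define ts where "ts = Sup S"
  have ts0: "0 \<le> ts" unfolding ts_def using cSup_upper[OF S0 Sb] .
  have tsT: "ts \<le> T" unfolding ts_def by (rule cSup_least[OF Sne]) (auto simp: S_def)
  have tsin: "ts \<in> {0..T}" using ts0 tsT by simp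
  have Pbelow: "fsem I P (\<phi> r)" if r: "r \<in> {0..<ts}" for r
  proof -
    have "r < Sup S" using r ts_def by simp
    then obtain s where "s \<in> S" "r < s" using less_cSup_iff[OF Sne Sb] by blast
    then show ?thesis using r unfolding S_def by auto
  qed
  define c where "c v = (case v of V y \<Rightarrow> \<phi> ts (V (xs ! idx ys y)) | D y \<Rightarrow> 0)" for v
  have cys: "c (V (ys ! i)) = \<phi> ts (V (xs ! i))" if "i < length xs" for i
    unfolding c_def using idx_nth[OF ys_dist] that ys_len by simp
  define \<omega>' where "\<omega>' v = (if v \<in> Y then c v else \<omega> v)" for v
  define \<phi>1 where "\<phi>1 \<zeta> v = (if v \<in> Y then c v else \<phi> \<zeta> v)" for \<zeta> v
  have vq1: "veq xs ys (\<phi>1 ts)"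
    unfolding veq_def \<phi>1_def using xsY ysY cys by simp
  have s1: "sol \<phi>1 ts (\<lambda>\<nu>. fsem I P \<nu> \<or> veq xs ys \<nu>)"
    unfolding \<phi>1_def
  proof (rule sol_frame[OF sol_restrict[OF s ts0 tsT] Yf], intro ballI impI)
    fix \<zeta> assume z: "\<zeta> \<in> {0..ts}"
    show "fsem I P (\<lambda>v. if v \<in> Y then c v else \<phi> \<zeta> v) \<or> veq xs ys (\<lambda>v. if v \<in> Y then c v else \<phi> \<zeta> v)"
    proof (cases "\<zeta> < ts")
      case True
      then have "fsem I P (\<phi> \<zeta>)" using Pbelow z by simp
      moreover have "fsem I P (\<lambda>v. if v \<in> Y then c v else \<phi> \<zeta> v) = fsem I P (\<phi> \<zeta>)" by (rule Pind) simp
      ultimately show ?thesis by simp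
    next
      case False
      then have zt: "\<zeta> = ts" using z by simp
      have "veq xs ys (\<lambda>v. if v \<in> Y then c v else \<phi> ts v)" using vq1 unfolding \<phi>1_def .
      then show ?thesis unfolding zt by (rule disjI2)
    qed
  qed
  have r1: "ode_rel I xs fs (\<lambda>\<nu>. fsem I P \<nu> \<or> veq xs ys \<nu>) \<omega>' (\<phi>1 ts)"
    unfolding ode_rel_sol
  proof (intro exI conjI)
    show "ts \<ge> 0" by (rule ts0)
    show "\<forall>v. v \<notin> D ` set xs \<longrightarrow> \<phi>1 0 v = \<omega>' v" using init unfolding \<phi>1_def \<omega>'_def by simp
  qed (rule refl, rule s1)
  have om: "\<forall>v. v \<notin> V ` set ys \<longrightarrow> \<omega>' v = \<omega> v" unfolding \<omega>'_def Y_def by simp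
  have "veq xs ys (\<phi>1 ts) \<longrightarrow> fsem I P (\<phi>1 ts) \<and> dia (ode_rel I xs fs (\<lambda>\<mu>. fsem I P \<mu> \<or> veq xs ys \<mu>)) (\<lambda>\<mu>. \<not> veq xs ys \<mu>) (\<phi>1 ts)"
    using rhs om r1 unfolding box_def by blast
  then have P1: "fsem I P (\<phi>1 ts)" and dia1: "dia (ode_rel I xs fs (\<lambda>\<mu>. fsem I P \<mu> \<or> veq xs ys \<mu>)) (\<lambda>\<mu>. \<not> veq xs ys \<mu>) (\<phi>1 ts)"
    using vq1 by auto
  have Pts: "fsem I P (\<phi> ts)"
  proof -
    have "fsem I P (\<phi>1 ts) = fsem I P (\<phi> ts)" by (rule Pind) (simp add: \<phi>1_def)
    then show ?thesis using P1 by simp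
  qed
  show "fsem I P \<nu>"
  proof (cases "ts = T")
    case True then show ?thesis using Pts \<phi>T by simp
  next
    case False
    then have tsl: "ts < T" using tsT by simp
    obtain \<mu> where r\<mu>: "ode_rel I xs fs (\<lambda>\<mu>. fsem I P \<mu> \<or> veq xs ys \<mu>) (\<phi>1 ts) \<mu>" and nv\<mu>: "\<not> veq xs ys \<mu>"
      using dia1 unfolding dia_def by blast
    obtain T' \<psi> where T': "T' \<ge> 0" and init\<psi>: "\<forall>v. v \<notin> D ` set xs \<longrightarrow> \<psi> 0 v = \<phi>1 ts v"
      and \<psi>T: "\<psi> T' = \<mu>" and s\<psi>: "sol \<psi> T' (\<lambda>\<mu>. fsem I P \<mu> \<or> veq xs ys \<mu>)"
      using r\<mu> unfolding ode_rel_sol by blast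
    have \<psi>0V: "\<psi> 0 (V x) = \<phi>1 ts (V x)" for x using init\<psi> by auto
    have T'pos: "T' > 0"
    proof (rule ccontr)
      assume "\<not> T' > 0"
      then have "T' = 0" using T' by simp
      then have "veq xs ys \<mu>" using vq1 \<psi>T \<psi>0V unfolding veq_def by simp
      then show False using nv\<mu> by contradiction
    qed
    define \<phi>2 where "\<phi>2 s = \<phi> (s + ts)" for s
    have s2: "sol \<phi>2 (T - ts) (\<lambda>_. True)" unfolding \<phi>2_def by (rule sol_shift[OF s ts0 tsT])
    have Tpos: "T - ts > 0" using tsl by simp
    have x0: "\<forall>i<length xs. \<phi>2 0 (V (xs!i)) = \<psi> 0 (V (xs!i))"
      using \<psi>0V xsY unfolding \<phi>2_def \<phi>1_def by simp
    have o0: "\<forall>i<length xs. \<forall>x. V x \<in> tvars (fs!i) \<longrightarrow> x \<notin> set xs \<longrightarrow> \<phi>2 0 (V x) = \<psi> 0 (V x)"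
    proof (intro allI impI)
      fix i x assume i: "i < length xs" and xv: "V x \<in> tvars (fs!i)"
      have "fs ! i \<in> set fs" using i fs_len by simp
      then have "V x \<notin> Y" using Yf xv by blast
      then show "\<phi>2 0 (V x) = \<psi> 0 (V x)" using \<psi>0V unfolding \<phi>2_def \<phi>1_def by simp
    qed
    obtain e where e: "e > 0" "e \<le> T - ts" "e \<le> T'"
      and agree: "\<forall>s\<in>{0..e}. \<forall>i<length xs. \<phi>2 s (V (xs!i)) = \<psi> s (V (xs!i))"
      using sol_unique[OF s2 s\<psi> Tpos T'pos x0 o0] by blast
    obtain i where i: "i < length xs" and nz: "tsem I (fs ! i) (\<phi> ts) \<noteq> 0" using evolves by blast
    obtain \<epsilon> where \<epsilon>: "\<epsilon> > 0" and esc: "\<forall>s. 0 < s \<longrightarrow> s < \<epsilon> \<longrightarrow> ts + s \<le> T \<longrightarrow> \<phi> (ts + s) (V (xs!i)) \<noteq> \<phi> ts (V (xs!i))"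
      using sol_escape[OF s ts0 tsl i nz] by blast
    define \<delta> where "\<delta> = min e (\<epsilon>/2)"
    have \<delta>: "\<delta> > 0" "\<delta> \<le> e" "\<delta> < \<epsilon>" unfolding \<delta>_def using e \<epsilon> by auto
    have "ts + \<delta> \<in> S"
      unfolding S_def
    proof (intro CollectI conjI ballI)
      show "ts + \<delta> \<in> {0..T}" using ts0 \<delta> e by simp
      fix r assume r: "r \<in> {0..<ts + \<delta>}"
      show "fsem I P (\<phi> r)"
      proof (cases "r < ts")
        case True then show ?thesis using Pbelow r by simp
      next
        case False
        show ?thesis
        proof (cases "r = ts")
          case True then show ?thesis using Pts by simp
        next
          case False
          define s where "s = r - ts"
          have sp: "0 < s" "s < \<delta>" using False \<open>\<not> r < ts\<close> r unfolding s_def by auto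
          have sin: "s \<in> {0..e}" "s \<in> {0..T'}" using sp \<delta> e by auto
          have rs: "r = s + ts" unfolding s_def by simp
          have "\<psi> s (V (ys!i)) = \<psi> 0 (V (ys!i))" by (rule solD3[OF s\<psi> sin(2) ysF[OF i]])
          also have "\<dots> = \<phi> ts (V (xs!i))" using \<psi>0V ysY[OF i] cys[OF i] unfolding \<phi>1_def by simp
          finally have yv: "\<psi> s (V (ys!i)) = \<phi> ts (V (xs!i))" .
          have "\<psi> s (V (xs!i)) = \<phi> (s + ts) (V (xs!i))" using agree sin(1) i unfolding \<phi>2_def by simp
          also have "\<dots> \<noteq> \<phi> ts (V (xs!i))" using esc sp \<delta> e by (simp add: add.commute)
          finally have "\<psi> s (V (xs!i)) \<noteq> \<psi> s (V (ys!i))" using yv by simp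
          then have "\<not> veq xs ys (\<psi> s)" unfolding veq_def using i by blast
          then have P\<psi>: "fsem I P (\<psi> s)" using solD2[OF s\<psi> sin(2)] by simp
          have "fsem I P (\<phi> r) = fsem I P (\<psi> s)"
          proof (rule fsem_agreeV[OF P_sa])
            fix x assume xP: "V x \<in> fvars P"
            show "\<phi> r (V x) = \<psi> s (V x)"
            proof (cases "x \<in> set xs")
              case True
              define k where "k = idx xs x"
              have k: "k < length xs" "xs ! k = x" unfolding k_def using True by (auto simp: idx_lt nth_idx)
              show ?thesis using agree sin(1) k rs unfolding \<phi>2_def by auto
            next
              case False
              then have nf: "V x \<notin> V ` set xs" "V x \<notin> D ` set xs" by auto
              have rin: "r \<in> {0..T}" using r ts0 \<delta> e by auto
              have "\<phi> r (V x) = \<phi> 0 (V x)" by (rule solD3[OF s rin nf])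
              also have "\<dots> = \<phi> ts (V x)" using solD3[OF s tsin nf] by simp
              also have "\<dots> = \<phi>1 ts (V x)" using PY[OF xP] unfolding \<phi>1_def by simp
              also have "\<dots> = \<psi> 0 (V x)" using \<psi>0V by simp
              also have "\<dots> = \<psi> s (V x)" using solD3[OF s\<psi> sin(2) nf] by simp
              finally show ?thesis .
            qed
          qed
          then show ?thesis using P\<psi> by simp
        qed
      qed
    qed
    then have "ts + \<delta> \<le> ts" unfolding ts_def by (rule cSup_upper[OF _ Sb])
    then show ?thesis using \<delta> by simp
  qed
qed

end


theorem lemma5p5:
  fixes I :: "nat \<Rightarrow> real list \<Rightarrow> real" and ar :: "nat \<Rightarrow> nat"
    and xs ys :: "ident list" and fs :: "trm list" and P :: fml
  assumes smoothI: "\<forall>g. smooth (ar g) (I g)"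
    and xs_dist: "distinct xs"
    and fs_len: "length fs = length xs"
    and fs_terms: "\<forall>t\<in>set fs. wf_trm ar t \<and> dfree t"
    and evolves: "\<forall>\<nu>. \<exists>i<length xs. tsem I (fs ! i) \<nu> \<noteq> 0"
    and P_sa: "semianalytic ar P"
    and ys_dist: "distinct ys"
    and ys_len: "length ys = length xs"
    and ys_fresh: "\<forall>y\<in>set ys. y \<notin> set xs \<and> V y \<notin> fvars P \<and> (\<forall>t\<in>set fs. V y \<notin> tvars t)"
  shows "\<forall>\<omega>. box (ode_rel I xs fs (\<lambda>_. True)) (fsem I P) \<omega> \<longleftrightarrow>
           (\<forall>\<omega>'. (\<forall>v. v \<notin> V ` set ys \<longrightarrow> \<omega>' v = \<omega> v) \<longrightarrow>
              box (ode_rel I xs fs (\<lambda>\<nu>. fsem I P \<nu> \<or> veq xs ys \<nu>))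
                  (\<lambda>\<nu>. veq xs ys \<nu> \<longrightarrow>
                        fsem I P \<nu> \<and>
                        dia (ode_rel I xs fs (\<lambda>\<mu>. fsem I P \<mu> \<or> veq xs ys \<mu>))
                            (\<lambda>\<mu>. \<not> veq xs ys \<mu>) \<nu>)
                  \<omega>')"
proof -
  interpret odectx I ar xs fs
    by (simp add: odectx_def smoothI xs_dist fs_len fs_terms)
  show ?thesis
  proof (intro allI iffI allI impI)
    fix \<omega> \<omega>'
    assume b: "box (ode_rel I xs fs (\<lambda>_. True)) (fsem I P) \<omega>"
      and om: "\<forall>v. v \<notin> V ` set ys \<longrightarrow> \<omega>' v = \<omega> v"
    from dir1[OF evolves P_sa ys_len ys_fresh b om]
    show "box (ode_rel I xs fs (\<lambda>\<nu>. fsem I P \<nu> \<or> veq xs ys \<nu>))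
                  (\<lambda>\<nu>. veq xs ys \<nu> \<longrightarrow>
                        fsem I P \<nu> \<and>
                        dia (ode_rel I xs fs (\<lambda>\<mu>. fsem I P \<mu> \<or> veq xs ys \<mu>))
                            (\<lambda>\<mu>. \<not> veq xs ys \<mu>) \<nu>)
                  \<omega>'" .
  next
    fix \<omega>
    assume r: "\<forall>\<omega>'. (\<forall>v. v \<notin> V ` set ys \<longrightarrow> \<omega>' v = \<omega> v) \<longrightarrow>
              box (ode_rel I xs fs (\<lambda>\<nu>. fsem I P \<nu> \<or> veq xs ys \<nu>))
                  (\<lambda>\<nu>. veq xs ys \<nu> \<longrightarrow>
                        fsem I P \<nu> \<and>
                        dia (ode_rel I xs fs (\<lambda>\<mu>. fsem I P \<mu> \<or> veq xs ys \<mu>))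
                            (\<lambda>\<mu>. \<not> veq xs ys \<mu>) \<nu>)
                  \<omega>'"
    from dir2[OF evolves P_sa ys_dist ys_len ys_fresh r]
    show "box (ode_rel I xs fs (\<lambda>_. True)) (fsem I P) \<omega>" .
  qed
qed

end
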